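(* Let $R$ be a pro-ring (object of $\operatorname{Pro}(\mathbf{Rng})$), let $K$ be a unital commutative ring (viewed as a constant pro-set), and suppose the unital commutative ring object $K$ acts on the ring object $R$ in $\operatorname{Pro}(\mathbf{Set})$, i.e. there is a morphism $K\times R\to R$, $(k,a)\mapsto ka$, in $\operatorname{Pro}(\mathbf{Set})$ which is biadditive and satisfies $(kk')a=k(k'a)$, $1a=a$, $k(ab)=(ka)b=a(kb)$ as equalities of morphisms in $\operatorname{Pro}(\mathbf{Set})$. Then $R$ is isomorphic in $\operatorname{Pro}(\mathbf{Rng})$ to a pro-$K$-algebra, i.e. a formal projective limit of an inverse system of (non-unital) $K$-algebras with $K$-linear transition maps, compatibly with the given action.
   Context: For a category $\mathcal C$, $\operatorname{Pro}(\mathcal C)$ is its pro-completion: objects are inverse systems, i.e. functors $X\colon \mathcal I_X^{op}\to\mathcal C$ with $\mathcal I_X$ a small filtered category, and $\operatorname{Hom}_{\operatorname{Pro}(\mathcal C)}(X,Y)=\varprojlim_{j\in\mathcal I_Y}\varinjlim_{i\in\mathcal I_X}\mathcal C(X_i,Y_j)$. $\mathbf{Rng}$ denotes non-unital associative rings; the canonical functor $\operatorname{Pro}(\mathbf{Rng})\to\mathrm{Rng}(\operatorname{Pro}(\mathbf{Set}))$ uses levelwise operations. *)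

theory Defs
  imports Main
begin

record ('o, 'm) cat =
  Ob  :: "'o set"
  Ar  :: "'m set"
  Dom :: "'m \<Rightarrow> 'o"
  Cod :: "'m \<Rightarrow> 'o"
  Cmp :: "'m \<Rightarrow> 'm \<Rightarrow> 'm"   (* Cmp C g f = g o f *)
  Idn :: "'o \<Rightarrow> 'm"

definition hom :: "('o, 'm) cat \<Rightarrow> 'o \<Rightarrow> 'o \<Rightarrow> 'm set" where
  "hom C a b = {u \<in> Ar C. Dom C u = a \<and> Cod C u = b}"

definition category :: "('o, 'm) cat \<Rightarrow> bool" where
  "category C \<longleftrightarrow>
     (\<forall>u\<in>Ar C. Dom C u \<in> Ob C \<and> Cod C u \<in> Ob C) \<and>
     (\<forall>a\<in>Ob C. Idn C a \<in> hom C a a) \<and>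
     (\<forall>f\<in>Ar C. \<forall>g\<in>Ar C. Cod C f = Dom C g \<longrightarrow> Cmp C g f \<in> hom C (Dom C f) (Cod C g)) \<and>
     (\<forall>f\<in>Ar C. Cmp C (Idn C (Cod C f)) f = f \<and> Cmp C f (Idn C (Dom C f)) = f) \<and>
     (\<forall>f\<in>Ar C. \<forall>g\<in>Ar C. \<forall>h\<in>Ar C. Cod C f = Dom C g \<and> Cod C g = Dom C h \<longrightarrow>
         Cmp C h (Cmp C g f) = Cmp C (Cmp C h g) f)"

text \<open>Filtered category (the index categories of pro-objects are \<open>I\<close>, functors go out of \<open>I^op\<close>).\<close>
definition filtered :: "('o, 'm) cat \<Rightarrow> bool" where
  "filtered C \<longleftrightarrow> category C \<and> Ob C \<noteq> {} \<and>
     (\<forall>a\<in>Ob C. \<forall>b\<in>Ob C. \<exists>c u v. u \<in> hom C a c \<and> v \<in> hom C b c) \<and>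
     (\<forall>a b u v. u \<in> hom C a b \<and> v \<in> hom C a b \<longrightarrow>
         (\<exists>c w. w \<in> hom C b c \<and> Cmp C w u = Cmp C w v))"

section \<open>Pro-sets: functors I^op \<rightarrow> Set with I small filtered\<close>

record ('o, 'm, 'x) pro =
  Ix :: "('o, 'm) cat"
  Lv :: "'o \<Rightarrow> 'x set"
  Tr :: "'m \<Rightarrow> 'x \<Rightarrow> 'x"   (* for u : a \<rightarrow> b, Tr u : Lv b \<rightarrow> Lv a *)

definition proset :: "('o, 'm, 'x) pro \<Rightarrow> bool" where
  "proset P \<longleftrightarrow> filtered (Ix P) \<and>
     (\<forall>u\<in>Ar (Ix P). \<forall>x\<in>Lv P (Cod (Ix P) u). Tr P u x \<in> Lv P (Dom (Ix P) u)) \<and>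
     (\<forall>a\<in>Ob (Ix P). \<forall>x\<in>Lv P a. Tr P (Idn (Ix P) a) x = x) \<and>
     (\<forall>f\<in>Ar (Ix P). \<forall>g\<in>Ar (Ix P). Cod (Ix P) f = Dom (Ix P) g \<longrightarrow>
         (\<forall>x\<in>Lv P (Cod (Ix P) g). Tr P (Cmp (Ix P) g f) x = Tr P f (Tr P g x)))"

text \<open>Equality in the filtered colimit \<open>colim_i C(X_i, Y_j)\<close> of two representatives
  \<open>(i, f)\<close> and \<open>(i', f')\<close>.\<close>
definition germ_eq :: "('o, 'm, 'x) pro \<Rightarrow> 'o \<Rightarrow> ('x \<Rightarrow> 'y) \<Rightarrow> 'o \<Rightarrow> ('x \<Rightarrow> 'y) \<Rightarrow> bool" where
  "germ_eq P i f i' f' \<longleftrightarrow>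
     (\<exists>k u u'. u \<in> hom (Ix P) i k \<and> u' \<in> hom (Ix P) i' k \<and>
        (\<forall>x\<in>Lv P k. f (Tr P u x) = f' (Tr P u' x)))"

text \<open>A morphism \<open>P \<rightarrow> Q\<close> in Pro(Set), given by a representative: for each index \<open>j\<close> of \<open>Q\<close>
  an index \<open>fst F j\<close> of \<open>P\<close> and a map \<open>snd F j : P_(fst F j) \<rightarrow> Q_j\<close>, compatible in
  \<open>lim_j colim_i Set(P_i, Q_j)\<close>.\<close>
type_synonym ('q, 'o, 'x, 'y) promap = "('q \<Rightarrow> 'o) \<times> ('q \<Rightarrow> 'x \<Rightarrow> 'y)"

definition promor :: "('o, 'm, 'x) pro \<Rightarrow> ('q, 'n, 'y) pro \<Rightarrow> ('q, 'o, 'x, 'y) promap \<Rightarrow> bool" where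
  "promor P Q F \<longleftrightarrow>
     (\<forall>j\<in>Ob (Ix Q). fst F j \<in> Ob (Ix P) \<and> (\<forall>x\<in>Lv P (fst F j). snd F j x \<in> Lv Q j)) \<and>
     (\<forall>v\<in>Ar (Ix Q). germ_eq P (fst F (Cod (Ix Q) v)) (\<lambda>x. Tr Q v (snd F (Cod (Ix Q) v) x))
                               (fst F (Dom (Ix Q) v)) (snd F (Dom (Ix Q) v)))"

definition promor_eq :: "('o, 'm, 'x) pro \<Rightarrow> ('q, 'n, 'y) pro \<Rightarrow>
    ('q, 'o, 'x, 'y) promap \<Rightarrow> ('q, 'o, 'x, 'y) promap \<Rightarrow> bool" where
  "promor_eq P Q F G \<longleftrightarrow> (\<forall>j\<in>Ob (Ix Q). germ_eq P (fst F j) (snd F j) (fst G j) (snd G j))"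

definition pcomp :: "('l, 'q, 'y, 'z) promap \<Rightarrow> ('q, 'o, 'x, 'y) promap \<Rightarrow> ('l, 'o, 'x, 'z) promap" where
  "pcomp G F = (\<lambda>l. fst F (fst G l), \<lambda>l x. snd G l (snd F (fst G l) x))"

definition pid :: "('o, 'o, 'x, 'x) promap" where
  "pid = (\<lambda>j. j, \<lambda>j x. x)"

definition lw :: "('o \<Rightarrow> 'x \<Rightarrow> 'y) \<Rightarrow> ('o, 'o, 'x, 'y) promap" where
  "lw f = (\<lambda>j. j, f)"

definition prod_cat :: "('o, 'm) cat \<Rightarrow> ('p, 'n) cat \<Rightarrow> ('o \<times> 'p, 'm \<times> 'n) cat" where
  "prod_cat C D = \<lparr> Ob = Ob C \<times> Ob D, Ar = Ar C \<times> Ar D,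
     Dom = (\<lambda>(u, v). (Dom C u, Dom D v)), Cod = (\<lambda>(u, v). (Cod C u, Cod D v)),
     Cmp = (\<lambda>(g, g') (f, f'). (Cmp C g f, Cmp D g' f')),
     Idn = (\<lambda>(a, b). (Idn C a, Idn D b)) \<rparr>"

definition pprod :: "('o, 'm, 'x) pro \<Rightarrow> ('p, 'n, 'y) pro \<Rightarrow> ('o \<times> 'p, 'm \<times> 'n, 'x \<times> 'y) pro" where
  "pprod P Q = \<lparr> Ix = prod_cat (Ix P) (Ix Q), Lv = (\<lambda>(a, b). Lv P a \<times> Lv Q b),
     Tr = (\<lambda>(u, v) (x, y). (Tr P u x, Tr Q v y)) \<rparr>"

definition cprod :: "'c set \<Rightarrow> ('o, 'm, 'x) pro \<Rightarrow> ('o, 'm, 'c \<times> 'x) pro" where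
  "cprod A P = \<lparr> Ix = Ix P, Lv = (\<lambda>a. A \<times> Lv P a), Tr = (\<lambda>u (c, x). (c, Tr P u x)) \<rparr>"

definition ctimes :: "('q, 'o, 'x, 'y) promap \<Rightarrow> ('q, 'o, 'c \<times> 'x, 'c \<times> 'y) promap" where
  "ctimes F = (fst F, \<lambda>j (c, x). (c, snd F j x))"

definition ptimes :: "('q, 'o, 'x, 'y) promap \<Rightarrow> ('r, 'p, 'z, 'w) promap \<Rightarrow>
    ('q \<times> 'r, 'o \<times> 'p, 'x \<times> 'z, 'y \<times> 'w) promap" where
  "ptimes F G = (\<lambda>(j1, j2). (fst F j1, fst G j2), \<lambda>(j1, j2) (x, y). (snd F j1 x, snd G j2 y))"

definition ub :: "('o, 'm) cat \<Rightarrow> 'o \<Rightarrow> 'o \<Rightarrow> 'o \<times> 'm \<times> 'm" where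
  "ub C a b = (SOME (c, u, v). u \<in> hom C a c \<and> v \<in> hom C b c)"

definition diag :: "('o, 'm, 'x) pro \<Rightarrow> ('o \<times> 'o, 'o, 'x, 'x \<times> 'x) promap" where
  "diag P = (\<lambda>(j1, j2). fst (ub (Ix P) j1 j2),
             \<lambda>(j1, j2) x. (Tr P (fst (snd (ub (Ix P) j1 j2))) x, Tr P (snd (snd (ub (Ix P) j1 j2))) x))"

record 'a rng =
  rcar  :: "'a set"
  radd  :: "'a \<Rightarrow> 'a \<Rightarrow> 'a"
  rmul  :: "'a \<Rightarrow> 'a \<Rightarrow> 'a"
  rzero :: "'a"
  rneg  :: "'a \<Rightarrow> 'a"

definition is_rng :: "'a rng \<Rightarrow> bool" where
  "is_rng A \<longleftrightarrow>
     rzero A \<in> rcar A \<and>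
     (\<forall>x\<in>rcar A. \<forall>y\<in>rcar A. radd A x y \<in> rcar A \<and> rmul A x y \<in> rcar A) \<and>
     (\<forall>x\<in>rcar A. rneg A x \<in> rcar A) \<and>
     (\<forall>x\<in>rcar A. \<forall>y\<in>rcar A. \<forall>z\<in>rcar A.
        radd A (radd A x y) z = radd A x (radd A y z) \<and>
        rmul A (rmul A x y) z = rmul A x (rmul A y z) \<and>
        rmul A x (radd A y z) = radd A (rmul A x y) (rmul A x z) \<and>
        rmul A (radd A x y) z = radd A (rmul A x z) (rmul A y z)) \<and>
     (\<forall>x\<in>rcar A. \<forall>y\<in>rcar A. radd A x y = radd A y x) \<and>
     (\<forall>x\<in>rcar A. radd A (rzero A) x = x \<and> radd A (rneg A x) x = rzero A)"

definition rng_hom :: "'a rng \<Rightarrow> 'b rng \<Rightarrow> ('a \<Rightarrow> 'b) \<Rightarrow> bool" where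
  "rng_hom A B f \<longleftrightarrow>
     (\<forall>x\<in>rcar A. f x \<in> rcar B) \<and>
     (\<forall>x\<in>rcar A. \<forall>y\<in>rcar A. f (radd A x y) = radd B (f x) (f y) \<and> f (rmul A x y) = rmul B (f x) (f y))"

record ('o, 'm, 'r) prorng =
  PIx :: "('o, 'm) cat"
  PRg :: "'o \<Rightarrow> 'r rng"
  PTr :: "'m \<Rightarrow> 'r \<Rightarrow> 'r"

definition und :: "('o, 'm, 'r) prorng \<Rightarrow> ('o, 'm, 'r) pro" where
  "und R = \<lparr> Ix = PIx R, Lv = (\<lambda>i. rcar (PRg R i)), Tr = PTr R \<rparr>"

definition is_prorng :: "('o, 'm, 'r) prorng \<Rightarrow> bool" where
  "is_prorng R \<longleftrightarrow> proset (und R) \<and>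
     (\<forall>i\<in>Ob (PIx R). is_rng (PRg R i)) \<and>
     (\<forall>u\<in>Ar (PIx R). rng_hom (PRg R (Cod (PIx R) u)) (PRg R (Dom (PIx R) u)) (PTr R u))"

definition prorng_mor :: "('o, 'm, 'r) prorng \<Rightarrow> ('q, 'n, 's) prorng \<Rightarrow> ('q, 'o, 'r, 's) promap \<Rightarrow> bool" where
  "prorng_mor R S F \<longleftrightarrow> promor (und R) (und S) F \<and>
     (\<forall>j\<in>Ob (PIx S). rng_hom (PRg R (fst F j)) (PRg S j) (snd F j))"

definition padd :: "('o, 'm, 'r) prorng \<Rightarrow> ('o, 'o \<times> 'o, 'r \<times> 'r, 'r) promap" where
  "padd R = (\<lambda>j. (j, j), \<lambda>j (a, b). radd (PRg R j) a b)"

definition pmul :: "('o, 'm, 'r) prorng \<Rightarrow> ('o, 'o \<times> 'o, 'r \<times> 'r, 'r) promap" where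
  "pmul R = (\<lambda>j. (j, j), \<lambda>j (a, b). rmul (PRg R j) a b)"

definition is_kalg :: "'s rng \<Rightarrow> ('k::comm_ring_1 \<Rightarrow> 's \<Rightarrow> 's) \<Rightarrow> bool" where
  "is_kalg A sm \<longleftrightarrow> is_rng A \<and>
     (\<forall>k. \<forall>a\<in>rcar A. sm k a \<in> rcar A) \<and>
     (\<forall>k k'. \<forall>a\<in>rcar A. \<forall>b\<in>rcar A.
        sm k (radd A a b) = radd A (sm k a) (sm k b) \<and>
        sm (k + k') a = radd A (sm k a) (sm k' a) \<and>
        sm (k * k') a = sm k (sm k' a) \<and>
        sm 1 a = a \<and>
        sm k (rmul A a b) = rmul A (sm k a) b \<and>
        sm k (rmul A a b) = rmul A a (sm k b))"

definition is_prokalg :: "('o, 'm, 's) prorng \<Rightarrow> ('o \<Rightarrow> 'k::comm_ring_1 \<Rightarrow> 's \<Rightarrow> 's) \<Rightarrow> bool" where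
  "is_prokalg S sm \<longleftrightarrow> is_prorng S \<and>
     (\<forall>j\<in>Ob (PIx S). is_kalg (PRg S j) (sm j)) \<and>
     (\<forall>u\<in>Ar (PIx S). \<forall>k. \<forall>x\<in>rcar (PRg S (Cod (PIx S) u)).
        PTr S u (sm (Cod (PIx S) u) k x) = sm (Dom (PIx S) u) k (PTr S u x))"

text \<open>A large "universe" type used for the index category and elements of the pro-K-algebra
  in the conclusion (HOL cannot quantify existentially over types).\<close>
type_synonym ('o, 'm, 'k, 'r) univ = "('o + 'm + 'k + 'r) list set"

end

theory Submission
  imports Defs
begin


lemma rngD:
  assumes "is_rng A"
  shows rng_zero: "rzero A \<in> rcar A"
  and rng_addc: "x \<in> rcar A \<Longrightarrow> y \<in> rcar A \<Longrightarrow> radd A x y \<in> rcar A"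
  and rng_mulc: "x \<in> rcar A \<Longrightarrow> y \<in> rcar A \<Longrightarrow> rmul A x y \<in> rcar A"
  and rng_negc: "x \<in> rcar A \<Longrightarrow> rneg A x \<in> rcar A"
  and rng_add_assoc: "x \<in> rcar A \<Longrightarrow> y \<in> rcar A \<Longrightarrow> z \<in> rcar A \<Longrightarrow> radd A (radd A x y) z = radd A x (radd A y z)"
  and rng_mul_assoc: "x \<in> rcar A \<Longrightarrow> y \<in> rcar A \<Longrightarrow> z \<in> rcar A \<Longrightarrow> rmul A (rmul A x y) z = rmul A x (rmul A y z)"
  and rng_distl: "x \<in> rcar A \<Longrightarrow> y \<in> rcar A \<Longrightarrow> z \<in> rcar A \<Longrightarrow> rmul A x (radd A y z) = radd A (rmul A x y) (rmul A x z)"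
  and rng_distr: "x \<in> rcar A \<Longrightarrow> y \<in> rcar A \<Longrightarrow> z \<in> rcar A \<Longrightarrow> rmul A (radd A x y) z = radd A (rmul A x z) (rmul A y z)"
  and rng_add_comm: "x \<in> rcar A \<Longrightarrow> y \<in> rcar A \<Longrightarrow> radd A x y = radd A y x"
  and rng_add0l: "x \<in> rcar A \<Longrightarrow> radd A (rzero A) x = x"
  and rng_negl: "x \<in> rcar A \<Longrightarrow> radd A (rneg A x) x = rzero A"
  using assms unfolding is_rng_def by auto

context fixes A assumes A: "is_rng A" begin

lemma rng_add0r: "x \<in> rcar A \<Longrightarrow> radd A x (rzero A) = x"
  using rng_add_comm[OF A] rng_add0l[OF A] rng_zero[OF A] by metis

lemma rng_negr: "x \<in> rcar A \<Longrightarrow> radd A x (rneg A x) = rzero A"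
  using rng_add_comm[OF A] rng_negl[OF A] rng_negc[OF A] by metis

lemma rng_cancel: assumes "x \<in> rcar A" "y \<in> rcar A" "z \<in> rcar A" "radd A x y = radd A x z" shows "y = z"
proof -
  have "y = radd A (radd A (rneg A x) x) y" using assms rng_negl[OF A] rng_add0l[OF A] by simp
  also have "\<dots> = radd A (rneg A x) (radd A x y)" using assms rng_add_assoc[OF A] rng_negc[OF A] by simp
  also have "\<dots> = radd A (radd A (rneg A x) x) z" using assms rng_add_assoc[OF A] rng_negc[OF A] by simp
  also have "\<dots> = z" using assms rng_negl[OF A] rng_add0l[OF A] by simp
  finally show ?thesis .
qed

lemma rng_neg_unique: assumes "x \<in> rcar A" "y \<in> rcar A" "radd A x y = rzero A" shows "y = rneg A x"
  using rng_cancel[OF assms(1) assms(2) rng_negc[OF A assms(1)]] assms rng_negr by simp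

lemma rng_mul0l: assumes "x \<in> rcar A" shows "rmul A (rzero A) x = rzero A"
proof -
  have z: "rzero A \<in> rcar A" using rng_zero[OF A] .
  have m: "rmul A (rzero A) x \<in> rcar A" using rng_mulc[OF A z assms] .
  have "radd A (rmul A (rzero A) x) (rmul A (rzero A) x) = radd A (rmul A (rzero A) x) (rzero A)"
    using rng_distr[OF A z z assms, symmetric] rng_add0l[OF A z] rng_add0r m by simp
  then show ?thesis using rng_cancel[OF m m z] by simp
qed

lemma rng_mul0r: assumes "x \<in> rcar A" shows "rmul A x (rzero A) = rzero A"
proof -
  have z: "rzero A \<in> rcar A" using rng_zero[OF A] .
  have m: "rmul A x (rzero A) \<in> rcar A" using rng_mulc[OF A assms z] .
  have "radd A (rmul A x (rzero A)) (rmul A x (rzero A)) = radd A (rmul A x (rzero A)) (rzero A)"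
    using rng_distl[OF A assms z z, symmetric] rng_add0l[OF A z] rng_add0r m by simp
  then show ?thesis using rng_cancel[OF m m z] by simp
qed

lemma rng_negmul_l: assumes "x \<in> rcar A" "y \<in> rcar A" shows "rmul A (rneg A x) y = rneg A (rmul A x y)"
proof -
  have "radd A (rmul A x y) (rmul A (rneg A x) y) = rmul A (radd A x (rneg A x)) y"
    using rng_distr[OF A assms(1) rng_negc[OF A assms(1)] assms(2)] by simp
  also have "\<dots> = rzero A" using rng_negr[OF assms(1)] rng_mul0l[OF assms(2)] by simp
  finally show ?thesis using rng_neg_unique rng_mulc[OF A] rng_negc[OF A] assms by simp
qed

lemma rng_negmul_r: assumes "x \<in> rcar A" "y \<in> rcar A" shows "rmul A x (rneg A y) = rneg A (rmul A x y)"
proof -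
  have "radd A (rmul A x y) (rmul A x (rneg A y)) = rmul A x (radd A y (rneg A y))"
    using rng_distl[OF A assms(1) assms(2) rng_negc[OF A assms(2)]] by simp
  also have "\<dots> = rzero A" using rng_negr[OF assms(2)] rng_mul0r[OF assms(1)] by simp
  finally show ?thesis using rng_neg_unique rng_mulc[OF A] rng_negc[OF A] assms by simp
qed

lemma rng_neg_add: assumes "x \<in> rcar A" "y \<in> rcar A" shows "rneg A (radd A x y) = radd A (rneg A x) (rneg A y)"
proof -
  have nx: "rneg A x \<in> rcar A" and ny: "rneg A y \<in> rcar A" using rng_negc[OF A] assms by auto
  have "radd A (radd A x y) (radd A (rneg A x) (rneg A y)) = radd A (radd A x (rneg A x)) (radd A y (rneg A y))"
  proof -
    have "radd A (radd A x y) (radd A (rneg A x) (rneg A y)) = radd A x (radd A y (radd A (rneg A x) (rneg A y)))"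
      using rng_add_assoc[OF A] rng_addc[OF A] assms nx ny by simp
    also have "radd A y (radd A (rneg A x) (rneg A y)) = radd A (rneg A x) (radd A y (rneg A y))"
      using rng_add_assoc[OF A] rng_add_comm[OF A] assms nx ny by (metis rng_addc[OF A])
    finally show ?thesis using rng_add_assoc[OF A] rng_addc[OF A] assms nx ny by simp
  qed
  also have "\<dots> = rzero A" using rng_negr assms rng_add0l[OF A] rng_zero[OF A] by simp
  finally show ?thesis using rng_neg_unique[of "radd A x y"] rng_addc[OF A] assms nx ny by metis
qed

lemma rng_add4: assumes "x \<in> rcar A" "y \<in> rcar A" "z \<in> rcar A" "w \<in> rcar A"
  shows "radd A (radd A x y) (radd A z w) = radd A (radd A x z) (radd A y w)"
proof -
  have "radd A (radd A x y) (radd A z w) = radd A x (radd A y (radd A z w))"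
    using rng_add_assoc[OF A] rng_addc[OF A] assms by simp
  also have "radd A y (radd A z w) = radd A z (radd A y w)"
    using rng_add_assoc[OF A] rng_add_comm[OF A] assms by (metis rng_addc[OF A])
  finally show ?thesis using rng_add_assoc[OF A] rng_addc[OF A] assms by simp
qed

end

lemma additive_zero: assumes A: "is_rng A" and B: "is_rng B" and f: "\<forall>x\<in>rcar A. f x \<in> rcar B"
  and add: "\<forall>x\<in>rcar A. \<forall>y\<in>rcar A. f (radd A x y) = radd B (f x) (f y)"
  shows "f (rzero A) = rzero B"
proof -
  have z: "rzero A \<in> rcar A" using rng_zero[OF A] .
  have "radd B (f (rzero A)) (f (rzero A)) = radd B (f (rzero A)) (rzero B)"
    using add z rng_add0l[OF A z] rng_add0r[OF B] f by metis
  then show ?thesis using rng_cancel[OF B] f z rng_zero[OF B] by metis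
qed

lemma additive_neg: assumes A: "is_rng A" and B: "is_rng B" and f: "\<forall>x\<in>rcar A. f x \<in> rcar B"
  and add: "\<forall>x\<in>rcar A. \<forall>y\<in>rcar A. f (radd A x y) = radd B (f x) (f y)" and x: "x \<in> rcar A"
  shows "f (rneg A x) = rneg B (f x)"
proof -
  have "radd B (f x) (f (rneg A x)) = rzero B"
    using add x rng_negc[OF A x] rng_negr[OF A x] additive_zero[OF A B f add] by metis
  then show ?thesis using rng_neg_unique[OF B] f x rng_negc[OF A x] by metis
qed



locale PR =
  fixes R :: "('o, 'm, 'r) prorng"
    and A :: "('o, 'o, 'k::comm_ring_1 \<times> 'r, 'r) promap"
  assumes R: "is_prorng R"
    and act: "promor (cprod (UNIV :: 'k set) (und R)) (und R) A"
    and mult_assoc: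
      "promor_eq (cprod (UNIV :: ('k \<times> 'k) set) (und R)) (und R)
         (pcomp A (lw (\<lambda>j ((k, k'), a). (k * k', a))))
         (pcomp A (pcomp (ctimes A) (lw (\<lambda>j ((k, k'), a). (k, (k', a))))))"
    and unit:
      "promor_eq (und R) (und R) (pcomp A (lw (\<lambda>j a. (1, a)))) pid"
    and add_right:
      "promor_eq (cprod (UNIV :: 'k set) (pprod (und R) (und R))) (und R)
         (pcomp A (ctimes (padd R)))
         (pcomp (padd R) (pcomp (ptimes A A) (lw (\<lambda>j (k, (a, b)). ((k, a), (k, b))))))"
    and add_left:
      "promor_eq (cprod (UNIV :: ('k \<times> 'k) set) (und R)) (und R)
         (pcomp A (lw (\<lambda>j ((k, k'), a). (k + k', a))))
         (pcomp (padd R) (pcomp (ptimes A A)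
            (pcomp (lw (\<lambda>j ((k, k'), (a, b)). ((k, a), (k', b)))) (ctimes (diag (und R))))))"
    and mul_left:
      "promor_eq (cprod (UNIV :: 'k set) (pprod (und R) (und R))) (und R)
         (pcomp A (ctimes (pmul R)))
         (pcomp (pmul R) (pcomp (ptimes A pid) (lw (\<lambda>j (k, (a, b)). ((k, a), b)))))"
    and mul_right:
      "promor_eq (cprod (UNIV :: 'k set) (pprod (und R) (und R))) (und R)
         (pcomp A (ctimes (pmul R)))
         (pcomp (pmul R) (pcomp (ptimes pid A) (lw (\<lambda>j (k, (a, b)). (a, (k, b))))))"
begin

abbreviation "I \<equiv> PIx R"
abbreviation "tr \<equiv> PTr R"
abbreviation "Rc j \<equiv> rcar (PRg R j)"
abbreviation "ad j \<equiv> radd (PRg R j)"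
abbreviation "mu j \<equiv> rmul (PRg R j)"
abbreviation "ze j \<equiv> rzero (PRg R j)"
abbreviation "ng j \<equiv> rneg (PRg R j)"
abbreviation "a \<equiv> fst A"
abbreviation "al j k x \<equiv> snd A j (k, x)"

lemma unit_germ: "j \<in> Ob I \<Longrightarrow> \<exists>m u u'. u \<in> hom I (a j) m \<and> u' \<in> hom I j m \<and> (\<forall>x\<in>Rc m. al j 1 (tr u x) = tr u' x)"
  using unit unfolding promor_eq_def germ_eq_def pcomp_def lw_def pid_def und_def
  by simp

lemma assoc_germ: "j \<in> Ob I \<Longrightarrow> \<exists>m u u'. u \<in> hom I (a j) m \<and> u' \<in> hom I (a (a j)) m \<and>
   (\<forall>x\<in>Rc m. \<forall>k c. al j (k*c) (tr u x) = al j k (al (a j) c (tr u' x)))"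
  using mult_assoc unfolding promor_eq_def germ_eq_def pcomp_def lw_def pid_def und_def cprod_def ctimes_def
  apply simp by blast

lemma addl_germ: "j \<in> Ob I \<Longrightarrow> \<exists>m u u'. u \<in> hom I (a j) m \<and> u' \<in> hom I (fst (ub I (a j) (a j))) m \<and>
   (\<forall>x\<in>Rc m. \<forall>k c. al j (k+c) (tr u x) = ad j (al j k (tr (fst (snd (ub I (a j) (a j)))) (tr u' x)))
         (al j c (tr (snd (snd (ub I (a j) (a j)))) (tr u' x))))"
  using add_left unfolding promor_eq_def germ_eq_def pcomp_def lw_def pid_def und_def cprod_def ctimes_def
    padd_def ptimes_def diag_def
  apply (simp add: split_beta) by blast

lemma hom_prod: "(u \<in> hom (prod_cat C D) x y) = (fst u \<in> hom C (fst x) (fst y) \<and> snd u \<in> hom D (snd x) (snd y))"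
  by (cases u; auto simp: hom_def prod_cat_def split_beta)

lemma addr_germ: "j \<in> Ob I \<Longrightarrow> \<exists>m1 m2 u1 u2 u1' u2'. u1 \<in> hom I (a j) m1 \<and> u2 \<in> hom I (a j) m2 \<and>
   u1' \<in> hom I (a j) m1 \<and> u2' \<in> hom I (a j) m2 \<and>
   (\<forall>x\<in>Rc m1. \<forall>y\<in>Rc m2. \<forall>k. al j k (ad (a j) (tr u1 x) (tr u2 y)) = ad j (al j k (tr u1' x)) (al j k (tr u2' y)))"
  using add_right unfolding promor_eq_def germ_eq_def pcomp_def lw_def pid_def und_def cprod_def ctimes_def
    padd_def ptimes_def pprod_def
  apply (simp add: split_beta hom_prod)
  apply (drule bspec, assumption) apply (elim exE conjE)
  by (intro exI conjI, assumption+, auto)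

lemma mull_germ: "j \<in> Ob I \<Longrightarrow> \<exists>m1 m2 u1 u2 u1' u2'. u1 \<in> hom I (a j) m1 \<and> u2 \<in> hom I (a j) m2 \<and>
   u1' \<in> hom I (a j) m1 \<and> u2' \<in> hom I j m2 \<and>
   (\<forall>x\<in>Rc m1. \<forall>y\<in>Rc m2. \<forall>k. al j k (mu (a j) (tr u1 x) (tr u2 y)) = mu j (al j k (tr u1' x)) (tr u2' y))"
  using mul_left unfolding promor_eq_def germ_eq_def pcomp_def lw_def pid_def und_def cprod_def ctimes_def
    pmul_def ptimes_def pprod_def
  apply (simp add: split_beta hom_prod)
  apply (drule bspec, assumption) apply (elim exE conjE)
  by (intro exI conjI, assumption+, auto)

lemma mulr_germ: "j \<in> Ob I \<Longrightarrow> \<exists>m1 m2 u1 u2 u1' u2'. u1 \<in> hom I (a j) m1 \<and> u2 \<in> hom I (a j) m2 \<and>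
   u1' \<in> hom I j m1 \<and> u2' \<in> hom I (a j) m2 \<and>
   (\<forall>x\<in>Rc m1. \<forall>y\<in>Rc m2. \<forall>k. al j k (mu (a j) (tr u1 x) (tr u2 y)) = mu j (tr u1' x) (al j k (tr u2' y)))"
  using mul_right unfolding promor_eq_def germ_eq_def pcomp_def lw_def pid_def und_def cprod_def ctimes_def
    pmul_def ptimes_def pprod_def
  apply (simp add: split_beta hom_prod)
  apply (drule bspec, assumption) apply (elim exE conjE)
  by (intro exI conjI, assumption+, auto)

lemma hom_D: "u \<in> hom C x y \<Longrightarrow> u \<in> Ar C \<and> Dom C u = x \<and> Cod C u = y"
  by (simp add: hom_def)

lemma nat_germ: "v \<in> hom I j j' \<Longrightarrow> \<exists>n r r'. r \<in> hom I (a j') n \<and> r' \<in> hom I (a j) n \<and>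
   (\<forall>x\<in>Rc n. \<forall>k. tr v (al j' k (tr r x)) = al j k (tr r' x))"
  using act hom_D[of v I j j'] unfolding promor_def germ_eq_def und_def cprod_def
  apply (simp add: split_beta)
  by blast

lemma catI: "category I" and filtI: "filtered I"
  using R unfolding is_prorng_def proset_def filtered_def und_def by auto

lemma ob_dom: "u \<in> hom I x y \<Longrightarrow> x \<in> Ob I" and ob_cod: "u \<in> hom I x y \<Longrightarrow> y \<in> Ob I"
  using catI unfolding category_def hom_def by auto

lemma idn_hom: "x \<in> Ob I \<Longrightarrow> Idn I x \<in> hom I x x"
  using catI unfolding category_def by auto

lemma cmp_hom: "f \<in> hom I x y \<Longrightarrow> g \<in> hom I y z \<Longrightarrow> Cmp I g f \<in> hom I x z"
  using catI unfolding category_def hom_def by auto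

lemma cmp_assoc: "f \<in> hom I x y \<Longrightarrow> g \<in> hom I y z \<Longrightarrow> h \<in> hom I z w \<Longrightarrow>
   Cmp I h (Cmp I g f) = Cmp I (Cmp I h g) f"
  using catI unfolding category_def hom_def by auto

lemma cmp_idl: "f \<in> hom I x y \<Longrightarrow> Cmp I (Idn I y) f = f"
  and cmp_idr: "f \<in> hom I x y \<Longrightarrow> Cmp I f (Idn I x) = f"
  using catI unfolding category_def hom_def by auto

lemma tr_mem: "u \<in> hom I x y \<Longrightarrow> z \<in> Rc y \<Longrightarrow> tr u z \<in> Rc x"
  using R unfolding is_prorng_def proset_def und_def hom_def by auto

lemma tr_id: "x \<in> Ob I \<Longrightarrow> z \<in> Rc x \<Longrightarrow> tr (Idn I x) z = z"
  using R unfolding is_prorng_def proset_def und_def by auto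

lemma tr_cmp: "f \<in> hom I x y \<Longrightarrow> g \<in> hom I y w \<Longrightarrow> z \<in> Rc w \<Longrightarrow> tr (Cmp I g f) z = tr f (tr g z)"
  using R unfolding is_prorng_def proset_def und_def hom_def by auto

lemma rngI: "x \<in> Ob I \<Longrightarrow> is_rng (PRg R x)"
  using R unfolding is_prorng_def by auto

lemma tr_hom: "u \<in> hom I x y \<Longrightarrow> rng_hom (PRg R y) (PRg R x) (tr u)"
  using R unfolding is_prorng_def hom_def by auto

lemma tr_add: "u \<in> hom I x y \<Longrightarrow> z \<in> Rc y \<Longrightarrow> z' \<in> Rc y \<Longrightarrow> tr u (ad y z z') = ad x (tr u z) (tr u z')"
  and tr_mul: "u \<in> hom I x y \<Longrightarrow> z \<in> Rc y \<Longrightarrow> z' \<in> Rc y \<Longrightarrow> tr u (mu y z z') = mu x (tr u z) (tr u z')"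
  using tr_hom[of u x y] unfolding rng_hom_def by auto

lemma a_ob: "j \<in> Ob I \<Longrightarrow> a j \<in> Ob I"
  using act unfolding promor_def cprod_def und_def by auto

lemma al_mem: "j \<in> Ob I \<Longrightarrow> x \<in> Rc (a j) \<Longrightarrow> al j k x \<in> Rc j"
  using act unfolding promor_def cprod_def und_def by auto

lemma bound: "x \<in> Ob I \<Longrightarrow> y \<in> Ob I \<Longrightarrow> \<exists>z u v. u \<in> hom I x z \<and> v \<in> hom I y z"
  using filtI unfolding filtered_def by blast

lemma equal: "u \<in> hom I x y \<Longrightarrow> v \<in> hom I x y \<Longrightarrow> \<exists>z w. w \<in> hom I y z \<and> Cmp I w u = Cmp I w v"
  using filtI unfolding filtered_def by blast

lemma ob_ne: "Ob I \<noteq> {}"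
  using filtI unfolding filtered_def by blast

lemma cone: "set os \<subseteq> Ob I \<Longrightarrow> \<exists>L c. L \<in> Ob I \<and> (\<forall>ob\<in>set os. c ob \<in> hom I ob L)"
proof (induction os)
  case Nil then show ?case using ob_ne by auto
next
  case (Cons ob os)
  then obtain L c where L: "L \<in> Ob I" "\<forall>ob\<in>set os. c ob \<in> hom I ob L" by auto
  have "ob \<in> Ob I" using Cons.prems by auto
  then obtain z u v0 where uv: "u \<in> hom I L z" "v0 \<in> hom I ob z" using bound[OF L(1)] by blast
  show ?case
    apply (rule exI[of _ z], rule exI[of _ "\<lambda>x. if x = ob then v0 else Cmp I u (c x)"])
    using uv L ob_cod[OF uv(1)] by (auto intro: cmp_hom)
qed

lemma cocone: "set os \<subseteq> Ob I \<Longrightarrow> \<forall>(x,y,e)\<in>set E. x \<in> set os \<and> y \<in> set os \<and> e \<in> hom I x y \<Longrightarrow>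
  \<exists>L c. L \<in> Ob I \<and> (\<forall>ob\<in>set os. c ob \<in> hom I ob L) \<and> (\<forall>(x,y,e)\<in>set E. Cmp I (c y) e = c x)"
proof (induction E)
  case Nil then show ?case using cone by auto
next
  case (Cons ed E)
  obtain x y e where ed: "ed = (x,y,e)" by (cases ed) auto
  from Cons obtain L c where L: "L \<in> Ob I" "\<forall>ob\<in>set os. c ob \<in> hom I ob L" "\<forall>(x,y,e)\<in>set E. Cmp I (c y) e = c x"
    by auto
  have xy: "x \<in> set os" "y \<in> set os" "e \<in> hom I x y" using Cons.prems ed by auto
  have "Cmp I (c y) e \<in> hom I x L" "c x \<in> hom I x L" using xy L by (auto intro: cmp_hom)
  then obtain z w where w: "w \<in> hom I L z" "Cmp I w (Cmp I (c y) e) = Cmp I w (c x)" using equal by blast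
  show ?case
  proof (rule exI[of _ z], rule exI[of _ "\<lambda>ob. Cmp I w (c ob)"], intro conjI)
    show "z \<in> Ob I" using ob_cod[OF w(1)] .
    show "\<forall>ob\<in>set os. Cmp I w (c ob) \<in> hom I ob z" using L w by (auto intro: cmp_hom)
    show "\<forall>(x', y', e')\<in>set (ed # E). Cmp I (Cmp I w (c y')) e' = Cmp I w (c x')"
    proof (intro ballI, clarify)
      fix x' y' e' assume "(x',y',e') \<in> set (ed # E)"
      then have m: "x' \<in> set os" "y' \<in> set os" "e' \<in> hom I x' y'" using Cons.prems by auto
      have "Cmp I (Cmp I w (c y')) e' = Cmp I w (Cmp I (c y') e')"
        using cmp_assoc[OF m(3) _ w(1), of "c y'"] L m by auto
      also have "\<dots> = Cmp I w (c x')"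
        using \<open>(x',y',e') \<in> set (ed # E)\<close> L(3) w(2) ed xy by auto
      finally show "Cmp I (Cmp I w (c y')) e' = Cmp I w (c x')" .
    qed
  qed
qed

lemma cocone_tr: "\<forall>ob\<in>set os. c ob \<in> hom I ob L \<Longrightarrow> (\<forall>(x,y,e)\<in>set E. Cmp I (c y) e = c x) \<Longrightarrow>
  (x,y,e) \<in> set E \<Longrightarrow> x \<in> set os \<Longrightarrow> y \<in> set os \<Longrightarrow> e \<in> hom I x y \<Longrightarrow> z \<in> Rc L \<Longrightarrow>
  tr e (tr (c y) z) = tr (c x) z"
  by (metis (mono_tags, lifting) case_prodD tr_cmp)


lemma cocone2: "set os \<subseteq> Ob I \<Longrightarrow> \<forall>(x,y,e)\<in>set E. x \<in> set os \<and> y \<in> set os \<and> e \<in> hom I x y \<Longrightarrow>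
  \<exists>L c. L \<in> Ob I \<and> (\<forall>ob\<in>set os. c ob \<in> hom I ob L) \<and>
     (\<forall>(x,y,e)\<in>set E. Cmp I (c y) e = c x \<and> (\<forall>z\<in>Rc L. tr e (tr (c y) z) = tr (c x) z))"
proof -
  assume a1: "set os \<subseteq> Ob I" and a2: "\<forall>(x,y,e)\<in>set E. x \<in> set os \<and> y \<in> set os \<and> e \<in> hom I x y"
  obtain L c where L: "L \<in> Ob I" "\<forall>ob\<in>set os. c ob \<in> hom I ob L" "\<forall>(x,y,e)\<in>set E. Cmp I (c y) e = c x"
    using cocone[OF a1 a2] by blast
  show ?thesis
  proof (rule exI[of _ L], rule exI[of _ c], intro conjI L(1) L(2), clarify)
    fix x y e assume xe: "(x,y,e) \<in> set E"
    then show "Cmp I (c y) e = c x \<and> (\<forall>z\<in>Rc L. tr e (tr (c y) z) = tr (c x) z)"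
      using cocone_tr[OF L(2) L(3) xe] a2 L(3) by auto
  qed
qed

lemma ub_spec: "x \<in> Ob I \<Longrightarrow> y \<in> Ob I \<Longrightarrow>
  fst (snd (ub I x y)) \<in> hom I x (fst (ub I x y)) \<and> snd (snd (ub I x y)) \<in> hom I y (fst (ub I x y))"
proof -
  assume "x \<in> Ob I" "y \<in> Ob I"
  then obtain z u v where "u \<in> hom I x z" "v \<in> hom I y z" using bound by blast
  then have "\<exists>p. (case p of (z, u, v) \<Rightarrow> u \<in> hom I x z \<and> v \<in> hom I y z)" by auto
  then have "case ub I x y of (z, u, v) \<Rightarrow> u \<in> hom I x z \<and> v \<in> hom I y z"
    unfolding ub_def by (rule someI_ex)
  then show ?thesis by (cases "ub I x y") auto
qed

definition G1 :: "'o \<Rightarrow> 'o \<Rightarrow> 'm \<Rightarrow> bool" where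
  "G1 j l t \<longleftrightarrow> (\<forall>y\<in>Rc l. \<forall>k c. al j (k+c) (tr t y) = ad j (al j k (tr t y)) (al j c (tr t y)))"
definition G2 :: "'o \<Rightarrow> 'o \<Rightarrow> 'm \<Rightarrow> bool" where
  "G2 j l t \<longleftrightarrow> (\<forall>y\<in>Rc l. \<forall>y'\<in>Rc l. \<forall>k. al j k (tr t (ad l y y')) = ad j (al j k (tr t y)) (al j k (tr t y')))"
definition G5 :: "'o \<Rightarrow> 'o \<Rightarrow> 'm \<Rightarrow> bool" where
  "G5 j l t \<longleftrightarrow> (\<exists>s\<in>hom I j l. \<forall>y\<in>Rc l. al j 1 (tr t y) = tr s y)"
definition G7 :: "'o \<Rightarrow> 'o \<Rightarrow> 'm \<Rightarrow> bool" where
  "G7 j l t \<longleftrightarrow> (\<forall>y\<in>Rc l. \<forall>y'\<in>Rc l. \<forall>k c. mu j (al j k (tr t y)) (al j c (tr t y')) = al j (k*c) (tr t (mu l y y')))"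

lemma ach1: assumes j: "j \<in> Ob I" and t: "t \<in> hom I (a j) l"
  shows "\<exists>l' q. q \<in> hom I l l' \<and> G1 j l' (Cmp I q t)"
proof -
  define e where "e = fst (ub I (a j) (a j))"
  define v1 where "v1 = fst (snd (ub I (a j) (a j)))"
  define v2 where "v2 = snd (snd (ub I (a j) (a j)))"
  obtain m u u' where g: "u \<in> hom I (a j) m" "u' \<in> hom I e m"
    "\<forall>x\<in>Rc m. \<forall>k c. al j (k+c) (tr u x) = ad j (al j k (tr v1 (tr u' x))) (al j c (tr v2 (tr u' x)))"
    using addl_germ[OF j] unfolding e_def v1_def v2_def by blast
  have v: "v1 \<in> hom I (a j) e" "v2 \<in> hom I (a j) e" using ub_spec[OF a_ob[OF j] a_ob[OF j]]
    unfolding e_def v1_def v2_def by auto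
  obtain L c where L: "L \<in> Ob I" "\<forall>ob\<in>set [a j, l, m, e]. c ob \<in> hom I ob L"
     "\<forall>(x,y,f)\<in>set [(a j,l,t),(a j,m,u),(e,m,u'),(a j,e,v1),(a j,e,v2)].
        Cmp I (c y) f = c x \<and> (\<forall>z\<in>Rc L. tr f (tr (c y) z) = tr (c x) z)"
    using cocone2[of "[a j, l, m, e]" "[(a j,l,t),(a j,m,u),(e,m,u'),(a j,e,v1),(a j,e,v2)]"]
      g v t a_ob[OF j] ob_cod[OF t] ob_cod[OF g(1)] ob_cod[OF v(1)] by auto
  have cl: "c l \<in> hom I l L" "c m \<in> hom I m L" "c e \<in> hom I e L" using L(2) by auto
  have E: "\<And>z. z \<in> Rc L \<Longrightarrow> tr t (tr (c l) z) = tr (c (a j)) z \<and> tr u (tr (c m) z) = tr (c (a j)) z \<and>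
     tr u' (tr (c m) z) = tr (c e) z \<and> tr v1 (tr (c e) z) = tr (c (a j)) z \<and> tr v2 (tr (c e) z) = tr (c (a j)) z"
    using L(3) by auto
  show ?thesis
  proof (intro exI conjI)
    show "c l \<in> hom I l L" by (rule cl)
    show "G1 j L (Cmp I (c l) t)" unfolding G1_def
    proof (intro ballI allI)
      fix z k c' assume z: "z \<in> Rc L"
      have "tr (Cmp I (c l) t) z = tr (c (a j)) z" using tr_cmp[OF t cl(1) z] E[OF z] by simp
      moreover have "tr (c m) z \<in> Rc m" using tr_mem[OF cl(2) z] .
      ultimately show "al j (k + c') (tr (Cmp I (c l) t) z) =
         ad j (al j k (tr (Cmp I (c l) t) z)) (al j c' (tr (Cmp I (c l) t) z))"
        using g(3) E[OF z] by metis
    qed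
  qed
qed


lemma ach2: assumes j: "j \<in> Ob I" and t: "t \<in> hom I (a j) l"
  shows "\<exists>l' q. q \<in> hom I l l' \<and> G2 j l' (Cmp I q t)"
proof -
  obtain m1 m2 u1 u2 u1' u2' where g: "u1 \<in> hom I (a j) m1" "u2 \<in> hom I (a j) m2"
    "u1' \<in> hom I (a j) m1" "u2' \<in> hom I (a j) m2"
    "\<forall>x\<in>Rc m1. \<forall>y\<in>Rc m2. \<forall>k. al j k (ad (a j) (tr u1 x) (tr u2 y)) = ad j (al j k (tr u1' x)) (al j k (tr u2' y))"
    using addr_germ[OF j] by blast
  obtain L c where L: "L \<in> Ob I" "\<forall>ob\<in>set [a j, l, m1, m2]. c ob \<in> hom I ob L"
     "\<forall>(x,y,f)\<in>set [(a j,l,t),(a j,m1,u1),(a j,m2,u2),(a j,m1,u1'),(a j,m2,u2')].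
        Cmp I (c y) f = c x \<and> (\<forall>z\<in>Rc L. tr f (tr (c y) z) = tr (c x) z)"
    using cocone2[of "[a j, l, m1, m2]" "[(a j,l,t),(a j,m1,u1),(a j,m2,u2),(a j,m1,u1'),(a j,m2,u2')]"]
      g t a_ob[OF j] ob_cod[OF t] ob_cod[OF g(1)] ob_cod[OF g(2)] by auto
  have cl: "c l \<in> hom I l L" "c m1 \<in> hom I m1 L" "c m2 \<in> hom I m2 L" "c (a j) \<in> hom I (a j) L" using L(2) by auto
  have E: "\<And>z. z \<in> Rc L \<Longrightarrow> tr t (tr (c l) z) = tr (c (a j)) z \<and> tr u1 (tr (c m1) z) = tr (c (a j)) z \<and>
     tr u2 (tr (c m2) z) = tr (c (a j)) z \<and> tr u1' (tr (c m1) z) = tr (c (a j)) z \<and> tr u2' (tr (c m2) z) = tr (c (a j)) z"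
    using L(3) by auto
  have T: "\<And>z. z \<in> Rc L \<Longrightarrow> tr (Cmp I (c l) t) z = tr (c (a j)) z" using tr_cmp[OF t cl(1)] E by simp
  show ?thesis
  proof (intro exI conjI)
    show "c l \<in> hom I l L" by (rule cl)
    show "G2 j L (Cmp I (c l) t)" unfolding G2_def
    proof (intro ballI allI)
      fix z z' k assume z: "z \<in> Rc L" and z': "z' \<in> Rc L"
      have "tr (Cmp I (c l) t) (ad L z z') = ad (a j) (tr (c (a j)) z) (tr (c (a j)) z')"
        using T tr_add[OF cl(4) z z'] rngI[OF L(1)] z z' unfolding is_rng_def by auto
      also have "\<dots> = ad (a j) (tr u1 (tr (c m1) z)) (tr u2 (tr (c m2) z'))" using E z z' by simp
      finally have 1: "tr (Cmp I (c l) t) (ad L z z') = ad (a j) (tr u1 (tr (c m1) z)) (tr u2 (tr (c m2) z'))" .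
      show "al j k (tr (Cmp I (c l) t) (ad L z z')) =
          ad j (al j k (tr (Cmp I (c l) t) z)) (al j k (tr (Cmp I (c l) t) z'))"
        unfolding 1 using g(5)[rule_format, OF tr_mem[OF cl(2) z] tr_mem[OF cl(3) z'], of k] E[OF z] E[OF z'] T z z'
        by simp
    qed
  qed
qed

lemma ach5: assumes j: "j \<in> Ob I" and t: "t \<in> hom I (a j) l"
  shows "\<exists>l' q. q \<in> hom I l l' \<and> G5 j l' (Cmp I q t)"
proof -
  obtain m u u' where g: "u \<in> hom I (a j) m" "u' \<in> hom I j m" "\<forall>x\<in>Rc m. al j 1 (tr u x) = tr u' x"
    using unit_germ[OF j] by blast
  obtain L c where L: "L \<in> Ob I" "\<forall>ob\<in>set [a j, j, l, m]. c ob \<in> hom I ob L"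
     "\<forall>(x,y,f)\<in>set [(a j,l,t),(a j,m,u),(j,m,u')].
        Cmp I (c y) f = c x \<and> (\<forall>z\<in>Rc L. tr f (tr (c y) z) = tr (c x) z)"
    using cocone2[of "[a j, j, l, m]" "[(a j,l,t),(a j,m,u),(j,m,u')]"]
      g t a_ob[OF j] j ob_cod[OF t] ob_cod[OF g(1)] by auto
  have cl: "c l \<in> hom I l L" "c m \<in> hom I m L" "c j \<in> hom I j L" using L(2) by auto
  have E: "\<And>z. z \<in> Rc L \<Longrightarrow> tr t (tr (c l) z) = tr (c (a j)) z \<and> tr u (tr (c m) z) = tr (c (a j)) z \<and>
     tr u' (tr (c m) z) = tr (c j) z"
    using L(3) by auto
  have T: "\<And>z. z \<in> Rc L \<Longrightarrow> tr (Cmp I (c l) t) z = tr (c (a j)) z" using tr_cmp[OF t cl(1)] E by simp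
  show ?thesis
  proof (intro exI conjI)
    show "c l \<in> hom I l L" by (rule cl)
    show "G5 j L (Cmp I (c l) t)" unfolding G5_def
    proof (intro bexI[of _ "c j"] ballI)
      fix z assume z: "z \<in> Rc L"
      show "al j 1 (tr (Cmp I (c l) t) z) = tr (c j) z"
        using g(3)[rule_format, OF tr_mem[OF cl(2) z]] E[OF z] T[OF z] by simp
    qed (rule cl(3))
  qed
qed


lemma ach7: assumes j: "j \<in> Ob I" and t: "t \<in> hom I (a j) l"
  shows "\<exists>l' q. q \<in> hom I l l' \<and> G7 j l' (Cmp I q t)"
proof -
  obtain m1 m2 u1 u2 u1' u2' where g1: "u1 \<in> hom I (a j) m1" "u2 \<in> hom I (a j) m2"
    "u1' \<in> hom I (a j) m1" "u2' \<in> hom I j m2"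
    "\<forall>x\<in>Rc m1. \<forall>y\<in>Rc m2. \<forall>k. al j k (mu (a j) (tr u1 x) (tr u2 y)) = mu j (al j k (tr u1' x)) (tr u2' y)"
    using mull_germ[OF j] by blast
  obtain n2 r r' where g2: "r \<in> hom I (a m2) n2" "r' \<in> hom I (a j) n2"
    "\<forall>x\<in>Rc n2. \<forall>k. tr u2' (al m2 k (tr r x)) = al j k (tr r' x)"
    using nat_germ[OF g1(4)] by blast
  obtain n3 r3 r3' where g3: "r3 \<in> hom I (a m2) n3" "r3' \<in> hom I (a (a j)) n3"
    "\<forall>x\<in>Rc n3. \<forall>k. tr u2 (al m2 k (tr r3 x)) = al (a j) k (tr r3' x)"
    using nat_germ[OF g1(2)] by blast
  obtain o1 o2 p1 p2 p1' p2' where g4: "p1 \<in> hom I (a (a j)) o1" "p2 \<in> hom I (a (a j)) o2"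
    "p1' \<in> hom I (a j) o1" "p2' \<in> hom I (a (a j)) o2"
    "\<forall>x\<in>Rc o1. \<forall>y\<in>Rc o2. \<forall>k. al (a j) k (mu (a (a j)) (tr p1 x) (tr p2 y)) = mu (a j) (tr p1' x) (al (a j) k (tr p2' y))"
    using mulr_germ[OF a_ob[OF j]] by blast
  obtain n5 v v' where g5: "v \<in> hom I (a j) n5" "v' \<in> hom I (a (a j)) n5"
   "\<forall>x\<in>Rc n5. \<forall>k c. al j (k*c) (tr v x) = al j k (al (a j) c (tr v' x))"
    using assoc_germ[OF j] by blast
  have m2: "m2 \<in> Ob I" using ob_cod[OF g1(2)] .
  have obs: "set [j, a j, a (a j), l, m1, m2, a m2, n2, n3, o1, o2, n5] \<subseteq> Ob I"
    using j a_ob[OF j] a_ob[OF a_ob[OF j]] ob_cod[OF t] ob_cod[OF g1(1)] m2 a_ob[OF m2]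
      ob_cod[OF g2(1)] ob_cod[OF g3(1)] ob_cod[OF g4(1)] ob_cod[OF g4(2)] ob_cod[OF g5(1)] by auto
  obtain L c where L: "L \<in> Ob I" "\<forall>ob\<in>set [j, a j, a (a j), l, m1, m2, a m2, n2, n3, o1, o2, n5]. c ob \<in> hom I ob L"
     "\<forall>(x,y,f)\<in>set [(a j,l,t),(a j,m1,u1),(a j,m2,u2),(a j,m1,u1'),(j,m2,u2'),(a m2,n2,r),(a j,n2,r'),
         (a m2,n3,r3),(a (a j),n3,r3'),(a (a j),o1,p1),(a (a j),o2,p2),(a j,o1,p1'),(a (a j),o2,p2'),
         (a j,n5,v),(a (a j),n5,v')].
        Cmp I (c y) f = c x \<and> (\<forall>z\<in>Rc L. tr f (tr (c y) z) = tr (c x) z)"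
    using cocone2[OF obs, of "[(a j,l,t),(a j,m1,u1),(a j,m2,u2),(a j,m1,u1'),(j,m2,u2'),(a m2,n2,r),(a j,n2,r'),
         (a m2,n3,r3),(a (a j),n3,r3'),(a (a j),o1,p1),(a (a j),o2,p2),(a j,o1,p1'),(a (a j),o2,p2'),
         (a j,n5,v),(a (a j),n5,v')]"] g1 g2 g3 g4 g5 t by auto
  have cl: "c l \<in> hom I l L" "c m1 \<in> hom I m1 L" "c m2 \<in> hom I m2 L" "c (a j) \<in> hom I (a j) L"
    "c (a (a j)) \<in> hom I (a (a j)) L" "c (a m2) \<in> hom I (a m2) L" "c n2 \<in> hom I n2 L" "c n3 \<in> hom I n3 L"
    "c o1 \<in> hom I o1 L" "c o2 \<in> hom I o2 L" "c n5 \<in> hom I n5 L"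
    using L(2) by auto
  have E: "\<And>z. z \<in> Rc L \<Longrightarrow> tr t (tr (c l) z) = tr (c (a j)) z \<and> tr u1 (tr (c m1) z) = tr (c (a j)) z \<and>
     tr u1' (tr (c m1) z) = tr (c (a j)) z \<and>
     tr r (tr (c n2) z) = tr (c (a m2)) z \<and> tr r' (tr (c n2) z) = tr (c (a j)) z \<and>
     tr r3 (tr (c n3) z) = tr (c (a m2)) z \<and> tr r3' (tr (c n3) z) = tr (c (a (a j))) z \<and>
     tr p1 (tr (c o1) z) = tr (c (a (a j))) z \<and> tr p2 (tr (c o2) z) = tr (c (a (a j))) z \<and>
     tr p1' (tr (c o1) z) = tr (c (a j)) z \<and> tr p2' (tr (c o2) z) = tr (c (a (a j))) z \<and>
     tr v (tr (c n5) z) = tr (c (a j)) z \<and> tr v' (tr (c n5) z) = tr (c (a (a j))) z"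
    using L(3) by auto
  have T: "\<And>z. z \<in> Rc L \<Longrightarrow> tr (Cmp I (c l) t) z = tr (c (a j)) z" using tr_cmp[OF t cl(1)] E by simp
  show ?thesis
  proof (intro exI conjI)
    show "c l \<in> hom I l L" by (rule cl)
    show "G7 j L (Cmp I (c l) t)" unfolding G7_def
    proof (intro ballI allI)
      fix z z' k k' assume z: "z \<in> Rc L" and z': "z' \<in> Rc L"
      define B where "B = al m2 k' (tr (c (a m2)) z')"
      have B: "B \<in> Rc m2" unfolding B_def using al_mem[OF m2 tr_mem[OF cl(6) z']] .
      have W: "mu L z z' \<in> Rc L" using rngI[OF L(1)] z z' unfolding is_rng_def by auto
      have s1: "al j k' (tr (c (a j)) z') = tr u2' B"
        using g2(3)[rule_format, OF tr_mem[OF cl(7) z'], of k'] E[OF z'] unfolding B_def by simp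
      have s2: "mu j (al j k (tr (c (a j)) z)) (tr u2' B) = al j k (mu (a j) (tr (c (a j)) z) (tr u2 B))"
        using g1(5)[rule_format, OF tr_mem[OF cl(2) z] B, of k] E[OF z] by simp
      have s3: "tr u2 B = al (a j) k' (tr (c (a (a j))) z')"
        using g3(3)[rule_format, OF tr_mem[OF cl(8) z'], of k'] E[OF z'] unfolding B_def by simp
      have s4: "mu (a j) (tr (c (a j)) z) (al (a j) k' (tr (c (a (a j))) z')) =
          al (a j) k' (mu (a (a j)) (tr (c (a (a j))) z) (tr (c (a (a j))) z'))"
        using g4(5)[rule_format, OF tr_mem[OF cl(9) z] tr_mem[OF cl(10) z'], of k'] E[OF z] E[OF z'] by simp
      have s5: "mu (a (a j)) (tr (c (a (a j))) z) (tr (c (a (a j))) z') = tr (c (a (a j))) (mu L z z')"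
        using tr_mul[OF cl(5) z z'] by simp
      have s6: "al j k (al (a j) k' (tr (c (a (a j))) (mu L z z'))) = al j (k*k') (tr (c (a j)) (mu L z z'))"
        using g5(3)[rule_format, OF tr_mem[OF cl(11) W], of k k'] E[OF W] by simp
      show "mu j (al j k (tr (Cmp I (c l) t) z)) (al j k' (tr (Cmp I (c l) t) z')) =
          al j (k * k') (tr (Cmp I (c l) t) (mu L z z'))"
        unfolding T[OF z] T[OF z'] T[OF W] s1 s2 s3 s4 s5 s6 ..
    qed
  qed
qed

end

context PR begin

definition good :: "'o \<times> 'o \<times> 'm \<Rightarrow> bool" where
  "good \<sigma> \<longleftrightarrow> (case \<sigma> of (j,l,t) \<Rightarrow> j \<in> Ob I \<and> t \<in> hom I (a j) l \<and> G1 j l t \<and> G2 j l t \<and> G5 j l t \<and> G7 j l t)"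

definition monop :: "('o \<Rightarrow> 'o \<Rightarrow> 'm \<Rightarrow> bool) \<Rightarrow> bool" where
  "monop P \<longleftrightarrow> (\<forall>j l t l' q. t \<in> hom I (a j) l \<longrightarrow> q \<in> hom I l l' \<longrightarrow> P j l t \<longrightarrow> P j l' (Cmp I q t))"

definition achv :: "('o \<Rightarrow> 'o \<Rightarrow> 'm \<Rightarrow> bool) \<Rightarrow> bool" where
  "achv P \<longleftrightarrow> (\<forall>j l t. j \<in> Ob I \<longrightarrow> t \<in> hom I (a j) l \<longrightarrow> (\<exists>l' q. q \<in> hom I l l' \<and> P j l' (Cmp I q t)))"

lemma achv_conj: assumes "monop P" "achv P" "achv Q" shows "achv (\<lambda>j l t. P j l t \<and> Q j l t)"
  unfolding achv_def
proof (intro allI impI)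
  fix j l t assume j: "j \<in> Ob I" and t: "t \<in> hom I (a j) l"
  obtain l1 q1 where q1: "q1 \<in> hom I l l1" "P j l1 (Cmp I q1 t)" using assms(2) j t unfolding achv_def by blast
  have t1: "Cmp I q1 t \<in> hom I (a j) l1" using cmp_hom[OF t q1(1)] .
  obtain l2 q2 where q2: "q2 \<in> hom I l1 l2" "Q j l2 (Cmp I q2 (Cmp I q1 t))" using assms(3) j t1 unfolding achv_def by blast
  have "P j l2 (Cmp I q2 (Cmp I q1 t))" using assms(1) t1 q2(1) q1(2) unfolding monop_def by blast
  moreover have "Cmp I q2 (Cmp I q1 t) = Cmp I (Cmp I q2 q1) t" using cmp_assoc[OF t q1(1) q2(1)] .
  ultimately show "\<exists>l' q. q \<in> hom I l l' \<and> P j l' (Cmp I q t) \<and> Q j l' (Cmp I q t)"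
    using q2 cmp_hom[OF q1(1) q2(1)] by auto
qed

lemma monop_conj: "monop P \<Longrightarrow> monop Q \<Longrightarrow> monop (\<lambda>j l t. P j l t \<and> Q j l t)"
  unfolding monop_def by blast

lemma mono1: "monop G1" unfolding monop_def G1_def
  by (auto simp: tr_cmp tr_mem)

lemma mono2: "monop G2" unfolding monop_def G2_def
  by (auto simp: tr_cmp tr_mem tr_add rngI ob_cod rng_addc)

lemma mono5: "monop G5" unfolding monop_def G5_def
proof (intro allI impI)
  fix j l t l' q assume t: "t \<in> hom I (a j) l" and q: "q \<in> hom I l l'"
    and "\<exists>s\<in>hom I j l. \<forall>y\<in>Rc l. al j 1 (tr t y) = tr s y"
  then obtain s where s: "s \<in> hom I j l" and h: "\<forall>y\<in>Rc l. al j 1 (tr t y) = tr s y" by blast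
  have "\<forall>y\<in>Rc l'. al j 1 (tr (Cmp I q t) y) = tr (Cmp I q s) y"
    using h tr_cmp[OF t q] tr_cmp[OF s q] tr_mem[OF q] by simp
  then show "\<exists>s\<in>hom I j l'. \<forall>y\<in>Rc l'. al j 1 (tr (Cmp I q t) y) = tr s y" using cmp_hom[OF s q] by blast
qed

lemma mono7: "monop G7" unfolding monop_def G7_def
  by (auto simp: tr_cmp tr_mem tr_mul rngI ob_cod rng_mulc)

lemma achv_good: "achv (\<lambda>j l t. G1 j l t \<and> G2 j l t \<and> G5 j l t \<and> G7 j l t)"
proof -
  have a1: "achv G1" and a2: "achv G2" and a5: "achv G5" and a7: "achv G7"
    unfolding achv_def using ach1 ach2 ach5 ach7 by blast+
  have "achv (\<lambda>j l t. G5 j l t \<and> G7 j l t)" by (rule achv_conj[OF mono5 a5 a7])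
  then have "achv (\<lambda>j l t. G2 j l t \<and> (G5 j l t \<and> G7 j l t))" by (rule achv_conj[OF mono2 a2])
  then show ?thesis by (rule achv_conj[OF mono1 a1])
qed

lemma good_ex: assumes j: "j \<in> Ob I" and t: "t \<in> hom I (a j) l"
  shows "\<exists>l' q. q \<in> hom I l l' \<and> good (j, l', Cmp I q t)"
  using achv_good j t cmp_hom[OF t] unfolding achv_def good_def by fastforce

lemma good_ex0: "j \<in> Ob I \<Longrightarrow> \<exists>l t. good (j, l, t)"
  using good_ex[of j "Idn I (a j)"] idn_hom a_ob by blast

lemma good_mono: "good (j,l,t) \<Longrightarrow> q \<in> hom I l l' \<Longrightarrow> good (j, l', Cmp I q t)"
  using mono1 mono2 mono5 mono7 cmp_hom unfolding good_def monop_def by simp meson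


lemma good_simp: "good (j,l,t) \<longleftrightarrow> j \<in> Ob I \<and> t \<in> hom I (a j) l \<and> G1 j l t \<and> G2 j l t \<and> G5 j l t \<and> G7 j l t"
  by (simp add: good_def)

lemma goodD: "good (j,l,t) \<Longrightarrow> j \<in> Ob I \<and> l \<in> Ob I \<and> t \<in> hom I (a j) l"
  by (auto simp: good_def ob_cod)

definition mor :: "'o \<times> 'o \<times> 'm \<Rightarrow> 'o \<times> 'o \<times> 'm \<Rightarrow> 'm \<Rightarrow> 'm \<Rightarrow> bool" where
  "mor \<sigma> \<tau> p q \<longleftrightarrow> good \<sigma> \<and> good \<tau> \<and> (case \<sigma> of (j1,l1,t1) \<Rightarrow> case \<tau> of (j2,l2,t2) \<Rightarrow>
     p \<in> hom I j1 j2 \<and> q \<in> hom I l1 l2 \<and> (\<forall>k. \<forall>y\<in>Rc l2. tr p (al j2 k (tr t2 y)) = al j1 k (tr t1 (tr q y))))"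

lemma mor_simp: "mor (j1,l1,t1) (j2,l2,t2) p q \<longleftrightarrow> good (j1,l1,t1) \<and> good (j2,l2,t2) \<and>
     p \<in> hom I j1 j2 \<and> q \<in> hom I l1 l2 \<and> (\<forall>k. \<forall>y\<in>Rc l2. tr p (al j2 k (tr t2 y)) = al j1 k (tr t1 (tr q y)))"
  by (simp add: mor_def)

lemma mor_id: assumes "good (j,l,t)" shows "mor (j,l,t) (j,l,t) (Idn I j) (Idn I l)"
  using goodD[OF assms] assms unfolding mor_simp
  by (auto simp: idn_hom tr_id al_mem tr_mem)

lemma mor_comp: assumes "mor (j1,l1,t1) (j2,l2,t2) p q" "mor (j2,l2,t2) (j3,l3,t3) p' q'"
  shows "mor (j1,l1,t1) (j3,l3,t3) (Cmp I p' p) (Cmp I q' q)"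
  unfolding mor_simp
proof (intro conjI allI ballI)
  show "good (j1,l1,t1)" "good (j3,l3,t3)" using assms unfolding mor_simp by auto
  have h: "p \<in> hom I j1 j2" "q \<in> hom I l1 l2" "p' \<in> hom I j2 j3" "q' \<in> hom I l2 l3"
    using assms unfolding mor_simp by auto
  show "Cmp I p' p \<in> hom I j1 j3" "Cmp I q' q \<in> hom I l1 l3" using h cmp_hom by auto
  fix k y assume y: "y \<in> Rc l3"
  have g3: "good (j3,l3,t3)" using assms unfolding mor_simp by auto
  have "tr (Cmp I p' p) (al j3 k (tr t3 y)) = tr p (tr p' (al j3 k (tr t3 y)))"
    using tr_cmp[OF h(1) h(3)] al_mem goodD[OF g3] tr_mem y by metis
  also have "\<dots> = tr p (al j2 k (tr t2 (tr q' y)))" using assms(2) y unfolding mor_simp by auto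
  also have "\<dots> = al j1 k (tr t1 (tr q (tr q' y)))" using assms(1) tr_mem[OF h(4) y] unfolding mor_simp by auto
  also have "\<dots> = al j1 k (tr t1 (tr (Cmp I q' q) y))" using tr_cmp[OF h(2) h(4) y] by simp
  finally show "tr (Cmp I p' p) (al j3 k (tr t3 y)) = al j1 k (tr t1 (tr (Cmp I q' q) y))" .
qed

lemma pull: assumes g: "good (j,l,t)" and q: "q \<in> hom I l l'"
  shows "mor (j,l,t) (j,l',Cmp I q t) (Idn I j) q"
  unfolding mor_simp using g good_mono[OF g q] goodD[OF g] q
  by (auto simp: idn_hom tr_id al_mem tr_mem tr_cmp)

lemma merge: assumes g1: "good (j,l1,t1)" and g2: "good (j,l2,t2)"
  shows "\<exists>l t q1 q2. mor (j,l1,t1) (j,l,t) (Idn I j) q1 \<and> mor (j,l2,t2) (j,l,t) (Idn I j) q2"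
proof -
  obtain L c where L: "L \<in> Ob I" "\<forall>ob\<in>set [a j, l1, l2]. c ob \<in> hom I ob L"
     "\<forall>(x,y,f)\<in>set [(a j,l1,t1),(a j,l2,t2)]. Cmp I (c y) f = c x \<and> (\<forall>z\<in>Rc L. tr f (tr (c y) z) = tr (c x) z)"
    using cocone2[of "[a j, l1, l2]" "[(a j,l1,t1),(a j,l2,t2)]"] goodD[OF g1] goodD[OF g2] a_ob by auto
  have e: "Cmp I (c l1) t1 = Cmp I (c l2) t2" using L(3) by auto
  show ?thesis using pull[OF g1, of "c l1" L] pull[OF g2, of "c l2" L] L(2) e by auto
qed

lemma ext: assumes g: "good (j,l,t)" and p: "p \<in> hom I j j'"
  shows "\<exists>l' t' q. mor (j,l,t) (j',l',t') p q"
proof -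
  obtain n r r' where n: "r \<in> hom I (a j') n" "r' \<in> hom I (a j) n"
   "\<forall>x\<in>Rc n. \<forall>k. tr p (al j' k (tr r x)) = al j k (tr r' x)" using nat_germ[OF p] by blast
  have gl: "j \<in> Ob I" "l \<in> Ob I" "t \<in> hom I (a j) l" using goodD[OF g] by auto
  obtain L c where L: "L \<in> Ob I" "\<forall>ob\<in>set [a j, l, n]. c ob \<in> hom I ob L"
     "\<forall>(x,y,f)\<in>set [(a j,l,t),(a j,n,r')]. Cmp I (c y) f = c x \<and> (\<forall>z\<in>Rc L. tr f (tr (c y) z) = tr (c x) z)"
    using cocone2[of "[a j, l, n]" "[(a j,l,t),(a j,n,r')]"] gl n a_ob ob_cod[OF n(1)] by auto
  have cl: "c l \<in> hom I l L" "c n \<in> hom I n L" using L(2) by auto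
  have t0: "Cmp I (c n) r \<in> hom I (a j') L" using cmp_hom[OF n(1) cl(2)] .
  obtain L' q2 where q2: "q2 \<in> hom I L L'" "good (j', L', Cmp I q2 (Cmp I (c n) r))"
    using good_ex[OF ob_cod[OF p] t0] by blast
  have "mor (j,l,t) (j',L',Cmp I q2 (Cmp I (c n) r)) p (Cmp I q2 (c l))"
    unfolding mor_simp
  proof (intro conjI allI ballI g q2(2) p cmp_hom[OF cl(1) q2(1)])
    fix k y assume y: "y \<in> Rc L'"
    have y1: "tr q2 y \<in> Rc L" using tr_mem[OF q2(1) y] .
    have "tr p (al j' k (tr (Cmp I q2 (Cmp I (c n) r)) y)) = tr p (al j' k (tr r (tr (c n) (tr q2 y))))"
      using tr_cmp[OF t0 q2(1) y] tr_cmp[OF n(1) cl(2) y1] by simp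
    also have "\<dots> = al j k (tr r' (tr (c n) (tr q2 y)))" using n(3) tr_mem[OF cl(2) y1] by simp
    also have "\<dots> = al j k (tr t (tr (c l) (tr q2 y)))" using L(3) y1 by simp
    also have "\<dots> = al j k (tr t (tr (Cmp I q2 (c l)) y))" using tr_cmp[OF cl(1) q2(1) y] by simp
    finally show "tr p (al j' k (tr (Cmp I q2 (Cmp I (c n) r)) y)) = al j k (tr t (tr (Cmp I q2 (c l)) y))" .
  qed
  then show ?thesis by blast
qed

lemma bound_S: assumes g1: "good (j1,l1,t1)" and g2: "good (j2,l2,t2)"
  shows "\<exists>j l t p1 q1 p2 q2. mor (j1,l1,t1) (j,l,t) p1 q1 \<and> mor (j2,l2,t2) (j,l,t) p2 q2"
proof -
  obtain j3 p1 p2 where p: "p1 \<in> hom I j1 j3" "p2 \<in> hom I j2 j3" using bound goodD[OF g1] goodD[OF g2] by blast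
  obtain la ta qa where a1: "mor (j1,l1,t1) (j3,la,ta) p1 qa" using ext[OF g1 p(1)] by blast
  obtain lb tb qb where b1: "mor (j2,l2,t2) (j3,lb,tb) p2 qb" using ext[OF g2 p(2)] by blast
  have "good (j3,la,ta)" "good (j3,lb,tb)" using a1 b1 unfolding mor_simp by auto
  then obtain l t r1 r2 where "mor (j3,la,ta) (j3,l,t) (Idn I j3) r1" "mor (j3,lb,tb) (j3,l,t) (Idn I j3) r2"
    using merge by blast
  then show ?thesis using mor_comp a1 b1 by blast
qed

lemma equal_S: assumes m1: "mor (j1,l1,t1) (j2,l2,t2) p q" and m2: "mor (j1,l1,t1) (j2,l2,t2) p' q'"
  shows "\<exists>j l t w e. mor (j2,l2,t2) (j,l,t) w e \<and> Cmp I w p = Cmp I w p' \<and> Cmp I e q = Cmp I e q'"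
proof -
  have h: "p \<in> hom I j1 j2" "p' \<in> hom I j1 j2" "q \<in> hom I l1 l2" "q' \<in> hom I l1 l2" "good (j2,l2,t2)"
    using m1 m2 unfolding mor_simp by auto
  obtain j3 w0 where w0: "w0 \<in> hom I j2 j3" "Cmp I w0 p = Cmp I w0 p'" using equal[OF h(1) h(2)] by blast
  obtain l3 t3 q3 where m3: "mor (j2,l2,t2) (j3,l3,t3) w0 q3" using ext[OF h(5) w0(1)] by blast
  have q3: "q3 \<in> hom I l2 l3" "good (j3,l3,t3)" using m3 unfolding mor_simp by auto
  obtain l4 e0 where e0: "e0 \<in> hom I l3 l4" "Cmp I e0 (Cmp I q3 q) = Cmp I e0 (Cmp I q3 q')"
    using equal[OF cmp_hom[OF h(3) q3(1)] cmp_hom[OF h(4) q3(1)]] by blast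
  have m4: "mor (j2,l2,t2) (j3,l4,Cmp I e0 t3) (Cmp I (Idn I j3) w0) (Cmp I e0 q3)"
    using mor_comp[OF m3 pull[OF q3(2) e0(1)]] .
  have "Cmp I (Cmp I (Idn I j3) w0) p = Cmp I (Cmp I (Idn I j3) w0) p'" using cmp_idl[OF w0(1)] w0(2) by simp
  moreover have "Cmp I (Cmp I e0 q3) q = Cmp I (Cmp I e0 q3) q'"
    using cmp_assoc[OF h(3) q3(1) e0(1)] cmp_assoc[OF h(4) q3(1) e0(1)] e0(2) by simp
  ultimately show ?thesis using m4 by blast
qed

end

context PR begin

inductive_set clo :: "'o \<Rightarrow> 'o \<Rightarrow> 'm \<Rightarrow> ('k \<Rightarrow> 'r) set" for j l t where
  gen: "y \<in> Rc l \<Longrightarrow> (\<lambda>k. al j k (tr t y)) \<in> clo j l t"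
| zer: "(\<lambda>k. ze j) \<in> clo j l t"
| add: "f \<in> clo j l t \<Longrightarrow> g \<in> clo j l t \<Longrightarrow> (\<lambda>k. ad j (f k) (g k)) \<in> clo j l t"
| neg: "f \<in> clo j l t \<Longrightarrow> (\<lambda>k. ng j (f k)) \<in> clo j l t"
| mul: "f \<in> clo j l t \<Longrightarrow> g \<in> clo j l t \<Longrightarrow> (\<lambda>k. mu j (f k) (g 1)) \<in> clo j l t"
| sml: "f \<in> clo j l t \<Longrightarrow> (\<lambda>k. f (k * c)) \<in> clo j l t"

context fixes j l t assumes g: "good (j,l,t)" begin

lemma gj: "j \<in> Ob I" and gl: "l \<in> Ob I" and gt: "t \<in> hom I (a j) l" and Rj: "is_rng (PRg R j)"
  using goodD[OF g] rngI by auto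

lemma g1: "G1 j l t" and g2: "G2 j l t" and g5: "G5 j l t" and g7: "G7 j l t"
  using g unfolding good_simp by auto

lemma phi_mem: "y \<in> Rc l \<Longrightarrow> al j k (tr t y) \<in> Rc j"
  using al_mem[OF gj tr_mem[OF gt]] .

lemma clo_val: "f \<in> clo j l t \<Longrightarrow> f k \<in> Rc j"
  by (induction arbitrary: k rule: clo.induct)
     (auto simp: phi_mem rng_zero[OF Rj] rng_addc[OF Rj] rng_negc[OF Rj] rng_mulc[OF Rj])

lemma clo_addk: "f \<in> clo j l t \<Longrightarrow> f (k + k') = ad j (f k) (f k')"
proof (induction arbitrary: k k' rule: clo.induct)
  case (gen y) then show ?case using g1 unfolding G1_def by auto
next
  case zer then show ?case using rng_add0l[OF Rj rng_zero[OF Rj]] by simp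
next
  case (add f g) then show ?case using rng_add4[OF Rj] clo_val by simp
next
  case (neg f) then show ?case using rng_neg_add[OF Rj] clo_val by simp
next
  case (mul f g) then show ?case using rng_distr[OF Rj] clo_val by simp
next
  case (sml f c) then show ?case by (simp add: distrib_right)
qed

lemma bal_gen: assumes fv: "\<forall>k. f k \<in> Rc j"
  and fb: "\<forall>y\<in>Rc l. \<forall>k c. mu j (f (k*c)) (al j 1 (tr t y)) = mu j (f k) (al j c (tr t y))"
  and h: "h \<in> clo j l t"
  shows "mu j (f (k*c)) (h 1) = mu j (f k) (h c)"
  using h
proof (induction arbitrary: k c rule: clo.induct)
  case (gen y) then show ?case using fb by auto
next
  case zer then show ?case using rng_mul0r[OF Rj] fv by simp
next
  case (add g1 g2) then show ?case using rng_distl[OF Rj] fv clo_val by simp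
next
  case (neg g1) then show ?case using rng_negmul_r[OF Rj] fv clo_val by simp
next
  case (mul g1 g2)
  have "mu j (f (k*c)) (mu j (g1 1) (g2 1)) = mu j (mu j (f (k*c)) (g1 1)) (g2 1)"
    using rng_mul_assoc[OF Rj] fv clo_val mul.hyps by simp
  also have "\<dots> = mu j (mu j (f k) (g1 c)) (g2 1)" using mul.IH by simp
  also have "\<dots> = mu j (f k) (mu j (g1 c) (g2 1))" using rng_mul_assoc[OF Rj] fv clo_val mul.hyps by simp
  finally show ?case by (simp only:)
next
  case (sml g1 c')
  have "mu j (f (k*c)) (g1 (1*c')) = mu j (f (k*c*c')) (g1 1)" using sml.IH[of "k*c" c'] by simp
  also have "\<dots> = mu j (f k) (g1 (c*c'))" using sml.IH[of k "c*c'"] by (simp add: mult.assoc)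
  finally show ?case by simp
qed

lemma clo_bal: "f \<in> clo j l t \<Longrightarrow> h \<in> clo j l t \<Longrightarrow> mu j (f (k*c)) (h 1) = mu j (f k) (h c)"
proof (induction arbitrary: h k c rule: clo.induct)
  case (gen y)
  show ?case
  proof (rule bal_gen[OF _ _ gen.prems])
    show "\<forall>k. al j k (tr t y) \<in> Rc j" using phi_mem gen by auto
    show "\<forall>y'\<in>Rc l. \<forall>k c. mu j (al j (k * c) (tr t y)) (al j 1 (tr t y')) = mu j (al j k (tr t y)) (al j c (tr t y'))"
      using g7 gen unfolding G7_def by auto
  qed
next
  case zer then show ?case using rng_mul0l[OF Rj] clo_val by simp
next
  case (add f1 f2) then show ?case using rng_distr[OF Rj] clo_val by simp
next
  case (neg f1) then show ?case using rng_negmul_l[OF Rj] clo_val by simp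
next
  case (mul f1 f2)
  have hh: "(\<lambda>k. mu j (f2 k) (h 1)) \<in> clo j l t" using clo.mul[OF mul.hyps(2) mul.prems] .
  have "mu j (mu j (f1 (k*c)) (f2 1)) (h 1) = mu j (f1 (k*c)) (mu j (f2 1) (h 1))"
    using rng_mul_assoc[OF Rj] clo_val mul.hyps mul.prems by simp
  also have "\<dots> = mu j (f1 k) (mu j (f2 c) (h 1))" using mul.IH(1)[OF hh, of k c] by simp
  also have "mu j (f2 c) (h 1) = mu j (f2 1) (h c)" using mul.IH(2)[OF mul.prems, of 1 c] by simp
  also have "mu j (f1 k) (mu j (f2 1) (h c)) = mu j (mu j (f1 k) (f2 1)) (h c)"
    using rng_mul_assoc[OF Rj] clo_val mul.hyps mul.prems by simp
  finally show ?case by (simp only:)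
next
  case (sml f1 c')
  show ?case using sml.IH[OF sml.prems, of "k*c'" c] by (simp add: ac_simps)
qed

end

lemma clo_tr: assumes m: "mor (j1,l1,t1) (j2,l2,t2) p q" and f: "f \<in> clo j2 l2 t2"
  shows "(\<lambda>k. tr p (f k)) \<in> clo j1 l1 t1"
proof -
  have h: "p \<in> hom I j1 j2" "q \<in> hom I l1 l2" "good (j1,l1,t1)" "good (j2,l2,t2)"
    and c: "\<forall>k. \<forall>y\<in>Rc l2. tr p (al j2 k (tr t2 y)) = al j1 k (tr t1 (tr q y))"
    using m unfolding mor_simp by auto
  have R1: "is_rng (PRg R j1)" and R2: "is_rng (PRg R j2)" using Rj h by auto
  have th: "rng_hom (PRg R j2) (PRg R j1) (tr p)" using tr_hom[OF h(1)] .
  have tm: "\<forall>x\<in>Rc j2. tr p x \<in> Rc j1" and ta: "\<forall>x\<in>Rc j2. \<forall>y\<in>Rc j2. tr p (ad j2 x y) = ad j1 (tr p x) (tr p y)"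
    and tmu: "\<forall>x\<in>Rc j2. \<forall>y\<in>Rc j2. tr p (mu j2 x y) = mu j1 (tr p x) (tr p y)"
    using th unfolding rng_hom_def by auto
  show ?thesis using f
  proof (induction rule: clo.induct)
    case (gen y) then show ?case using c clo.gen[of "tr q y" l1 j1 t1] tr_mem[OF h(2)] by simp
  next
    case zer then show ?case using additive_zero[OF R2 R1 tm ta] clo.zer by simp
  next
    case (add f g) then show ?case using ta clo_val[OF h(4)] clo.add[OF add.IH] by simp
  next
    case (neg f) then show ?case using additive_neg[OF R2 R1 tm ta] clo_val[OF h(4)] clo.neg[OF neg.IH] by simp
  next
    case (mul f g) then show ?case using tmu clo_val[OF h(4)] clo.mul[OF mul.IH] by simp
  next
    case (sml f c) then show ?case using clo.sml by blast
  qed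
qed

end

context PR begin

lemma M_germ: assumes j: "j \<in> Ob I" and t: "t \<in> hom I (a j) l"
  shows "\<exists>m u u'. u \<in> hom I (a l) m \<and> u' \<in> hom I l m \<and>
    (\<forall>z\<in>Rc m. \<forall>k c. al j k (tr t (al l c (tr u z))) = al j (k*c) (tr t (tr u' z)))"
proof -
  obtain n1 u1 u1' where g1: "u1 \<in> hom I (a l) n1" "u1' \<in> hom I (a (a j)) n1"
    "\<forall>x\<in>Rc n1. \<forall>k. tr t (al l k (tr u1 x)) = al (a j) k (tr u1' x)" using nat_germ[OF t] by blast
  obtain n2 u2 u2' where g2: "u2 \<in> hom I (a j) n2" "u2' \<in> hom I (a (a j)) n2"
   "\<forall>x\<in>Rc n2. \<forall>k c. al j (k*c) (tr u2 x) = al j k (al (a j) c (tr u2' x))" using assoc_germ[OF j] by blast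
  have l: "l \<in> Ob I" using ob_cod[OF t] .
  have obs: "set [a j, a (a j), l, a l, n1, n2] \<subseteq> Ob I"
    using a_ob[OF j] a_ob[OF a_ob[OF j]] l a_ob[OF l] ob_cod[OF g1(1)] ob_cod[OF g2(1)] by auto
  obtain L c where L: "L \<in> Ob I" "\<forall>ob\<in>set [a j, a (a j), l, a l, n1, n2]. c ob \<in> hom I ob L"
     "\<forall>(x,y,f)\<in>set [(a j,l,t),(a l,n1,u1),(a (a j),n1,u1'),(a j,n2,u2),(a (a j),n2,u2')].
        Cmp I (c y) f = c x \<and> (\<forall>z\<in>Rc L. tr f (tr (c y) z) = tr (c x) z)"
    using cocone2[OF obs, of "[(a j,l,t),(a l,n1,u1),(a (a j),n1,u1'),(a j,n2,u2),(a (a j),n2,u2')]"]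
      g1 g2 t by auto
  have cl: "c l \<in> hom I l L" "c (a l) \<in> hom I (a l) L" "c n1 \<in> hom I n1 L" "c n2 \<in> hom I n2 L"
    using L(2) by auto
  have E: "\<And>z. z \<in> Rc L \<Longrightarrow> tr t (tr (c l) z) = tr (c (a j)) z \<and> tr u1 (tr (c n1) z) = tr (c (a l)) z \<and>
     tr u1' (tr (c n1) z) = tr (c (a (a j))) z \<and> tr u2 (tr (c n2) z) = tr (c (a j)) z \<and>
     tr u2' (tr (c n2) z) = tr (c (a (a j))) z"
    using L(3) by auto
  show ?thesis
  proof (intro exI conjI ballI allI)
    show "c (a l) \<in> hom I (a l) L" "c l \<in> hom I l L" using cl by auto
    fix z k c' assume z: "z \<in> Rc L"
    have "tr t (al l c' (tr (c (a l)) z)) = al (a j) c' (tr (c (a (a j))) z)"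
      using g1(3)[rule_format, OF tr_mem[OF cl(3) z], of c'] E[OF z] by simp
    moreover have "al j k (al (a j) c' (tr (c (a (a j))) z)) = al j (k*c') (tr (c (a j)) z)"
      using g2(3)[rule_format, OF tr_mem[OF cl(4) z], of k c'] E[OF z] by simp
    ultimately show "al j k (tr t (al l c' (tr (c (a l)) z))) = al j (k * c') (tr t (tr (c l) z))"
      using E[OF z] by simp
  qed
qed

lemma FG: assumes gs: "good (j,l,t)" and gg: "good (l,l',t')"
  shows "\<exists>L qa qb s. mor (l,l',t') (l,L,Cmp I qa t') (Idn I l) qa \<and> mor (j,l,t) (l,L,Cmp I qa t') s qb \<and>
    (\<forall>f\<in>clo l L (Cmp I qa t'). \<forall>k. al j k (tr t (tr (Idn I l) (f 1))) = tr s (f k))"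
proof -
  have j: "j \<in> Ob I" and t: "t \<in> hom I (a j) l" and l: "l \<in> Ob I" and t': "t' \<in> hom I (a l) l'"
    using goodD[OF gs] goodD[OF gg] by auto
  obtain m u u' where M: "u \<in> hom I (a l) m" "u' \<in> hom I l m"
    "\<forall>z\<in>Rc m. \<forall>k c. al j k (tr t (al l c (tr u z))) = al j (k*c) (tr t (tr u' z))"
    using M_germ[OF j t] by blast
  obtain s where s: "s \<in> hom I j l" "\<forall>y\<in>Rc l. al j 1 (tr t y) = tr s y" using g5[OF gs] unfolding G5_def by blast
  have obs: "set [a l, l', m, l] \<subseteq> Ob I" using a_ob[OF l] l ob_cod[OF t'] ob_cod[OF M(1)] by auto
  obtain L c where L: "L \<in> Ob I" "\<forall>ob\<in>set [a l, l', m, l]. c ob \<in> hom I ob L"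
     "\<forall>(x,y,f)\<in>set [(a l,l',t'),(a l,m,u),(l,m,u')].
        Cmp I (c y) f = c x \<and> (\<forall>z\<in>Rc L. tr f (tr (c y) z) = tr (c x) z)"
    using cocone2[OF obs, of "[(a l,l',t'),(a l,m,u),(l,m,u')]"] M t' by auto
  have cl: "c l \<in> hom I l L" "c l' \<in> hom I l' L" "c m \<in> hom I m L" using L(2) by auto
  define T where "T = Cmp I (c l') t'"
  have T: "T \<in> hom I (a l) L" unfolding T_def using cmp_hom[OF t' cl(2)] .
  have E: "\<And>z. z \<in> Rc L \<Longrightarrow> tr T z = tr u (tr (c m) z) \<and> tr (c l) z = tr u' (tr (c m) z)"
    using L(3) tr_cmp[OF t' cl(2)] unfolding T_def by auto
  have mid: "\<And>z k c'. z \<in> Rc L \<Longrightarrow> al j k (tr t (al l c' (tr T z))) = al j (k*c') (tr t (tr (c l) z))"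
    using M(3) E tr_mem[OF cl(3)] by simp
  have gt: "good (l, L, T)" unfolding T_def using good_mono[OF gg cl(2)] .
  have m1: "mor (l,l',t') (l,L,T) (Idn I l) (c l')" unfolding T_def using pull[OF gg cl(2)] .
  have m2: "mor (j,l,t) (l,L,T) s (c l)" unfolding mor_simp
  proof (intro conjI gs gt s(1) cl(1) allI ballI)
    fix k y assume y: "y \<in> Rc L"
    have "al l k (tr T y) \<in> Rc l" using al_mem[OF l tr_mem[OF T y]] .
    then show "tr s (al l k (tr T y)) = al j k (tr t (tr (c l) y))"
      using s(2) mid[OF y, of 1 k] by simp
  qed
  have Rl: "is_rng (PRg R l)" and Rj: "is_rng (PRg R j)" using rngI l j by auto
  have phiadd: "\<forall>x\<in>Rc l. \<forall>y\<in>Rc l. al j k (tr t (ad l x y)) = ad j (al j k (tr t x)) (al j k (tr t y))" for k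
    using g2[OF gs] unfolding G2_def by auto
  have phimem: "\<forall>x\<in>Rc l. al j k (tr t x) \<in> Rc j" for k using al_mem[OF j tr_mem[OF t]] by auto
  have th: "rng_hom (PRg R l) (PRg R j) (tr s)" using tr_hom[OF s(1)] .
  have tm: "\<forall>x\<in>Rc l. tr s x \<in> Rc j" and ta: "\<forall>x\<in>Rc l. \<forall>y\<in>Rc l. tr s (ad l x y) = ad j (tr s x) (tr s y)"
    and tmu: "\<forall>x\<in>Rc l. \<forall>y\<in>Rc l. tr s (mu l x y) = mu j (tr s x) (tr s y)"
    using th unfolding rng_hom_def by auto
  have inv: "f \<in> clo l L T \<Longrightarrow> al j k (tr t (f c')) = tr s (f (k*c'))" for f k c'
  proof (induction arbitrary: k c' rule: clo.induct)
    case (gen y)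
    have "al l (k*c') (tr T y) \<in> Rc l" using al_mem[OF l tr_mem[OF T gen]] .
    then show ?case using mid[OF gen, of k c'] mid[OF gen, of 1 "k*c'"] s(2) by simp
  next
    case zer show ?case using additive_zero[OF Rl Rj phimem phiadd] additive_zero[OF Rl Rj tm ta] by simp
  next
    case (add f1 f2) then show ?case using phiadd ta clo_val[OF gt] by simp
  next
    case (neg f1) then show ?case
      using additive_neg[OF Rl Rj phimem phiadd] additive_neg[OF Rl Rj tm ta] clo_val[OF gt] by simp
  next
    case (mul f1 f2)
    have "al j k (tr t (mu l (f1 c') (f2 1))) = mu j (al j k (tr t (f1 c'))) (al j 1 (tr t (f2 1)))"
      using g7[OF gs] clo_val[OF gt] mul.hyps unfolding G7_def by simp
    also have "\<dots> = mu j (tr s (f1 (k*c'))) (tr s (f2 1))" using mul.IH[of k c'] mul.IH(2)[of 1 1] by simp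
    also have "\<dots> = tr s (mu l (f1 (k*c')) (f2 1))" using tmu clo_val[OF gt] mul.hyps by simp
    finally show ?case by (simp only:)
  next
    case (sml f1 c1) then show ?case by (simp add: ac_simps)
  qed
  show ?thesis
  proof (intro exI conjI)
    show "mor (l,l',t') (l,L,Cmp I (c l') t') (Idn I l) (c l')" using m1 unfolding T_def .
    show "mor (j,l,t) (l,L,Cmp I (c l') t') s (c l)" using m2 unfolding T_def .
    show "\<forall>f\<in>clo l L (Cmp I (c l') t'). \<forall>k. al j k (tr t (tr (Idn I l) (f 1))) = tr s (f k)"
      using inv[of _ _ 1] clo_val[OF gt] tr_id[OF l] unfolding T_def by simp
  qed
qed

end


definition EO :: "'o \<times> 'o \<times> 'm \<Rightarrow> ('o,'m,'k,'r) univ" where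
  "EO x = (case x of (j,l,t) \<Rightarrow> {[Inl j, Inl l, Inr (Inl t)]})"
definition EM :: "('o \<times> 'o \<times> 'm) \<times> ('o \<times> 'o \<times> 'm) \<times> 'm \<times> 'm \<Rightarrow> ('o,'m,'k,'r) univ" where
  "EM x = (case x of ((j1,l1,t1),(j2,l2,t2),p,q) \<Rightarrow>
     {[Inl j1, Inl l1, Inr (Inl t1), Inl j2, Inl l2, Inr (Inl t2), Inr (Inl p), Inr (Inl q)]})"
definition EF :: "('k \<Rightarrow> 'r) \<Rightarrow> ('o,'m,'k,'r) univ" where
  "EF f = range (\<lambda>k. [Inr (Inr (Inl k)), Inr (Inr (Inr (f k)))])"

lemma inj_EO: "inj EO"
proof (rule injI)
  fix x y :: "'o \<times> 'o \<times> 'm" assume e: "(EO x :: ('o,'m,'k,'r) univ) = EO y"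
  obtain a1 b1 c1 a2 b2 c2 where "x = (a1,b1,c1)" "y = (a2,b2,c2)" by (cases x; cases y) auto
  with e show "x = y" unfolding EO_def by simp
qed
lemma inj_EM: "inj EM"
proof (rule injI)
  fix x y :: "('o \<times> 'o \<times> 'm) \<times> ('o \<times> 'o \<times> 'm) \<times> 'm \<times> 'm"
  assume e: "(EM x :: ('o,'m,'k,'r) univ) = EM y"
  obtain a1 b1 c1 d1 e1 f1 g1 h1 where x: "x = ((a1,b1,c1),(d1,e1,f1),g1,h1)" by (metis prod.exhaust)
  obtain a2 b2 c2 d2 e2 f2 g2 h2 where y: "y = ((a2,b2,c2),(d2,e2,f2),g2,h2)" by (metis prod.exhaust)
  from e show "x = y" unfolding EM_def x y by simp
qed
lemma inj_EF: "inj EF"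
proof (rule injI)
  fix f g :: "'k \<Rightarrow> 'r" assume e: "(EF f :: ('o,'m,'k,'r) univ) = EF g"
  show "f = g"
  proof
    fix k
    have "[Inr (Inr (Inl k)), Inr (Inr (Inr (f k)))] \<in> (EF f :: ('o,'m,'k,'r) univ)"
      unfolding EF_def by (rule rangeI)
    then have "[Inr (Inr (Inl k)), Inr (Inr (Inr (f k)))] \<in> (EF g :: ('o,'m,'k,'r) univ)"
      using e by simp
    then show "f k = g k" unfolding EF_def by auto
  qed
qed

definition DO :: "('o,'m,'k,'r) univ \<Rightarrow> 'o \<times> 'o \<times> 'm" where "DO = inv EO"
definition DM :: "('o,'m,'k,'r) univ \<Rightarrow> ('o \<times> 'o \<times> 'm) \<times> ('o \<times> 'o \<times> 'm) \<times> 'm \<times> 'm" where "DM = inv EM"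
definition DF :: "('o,'m,'k,'r) univ \<Rightarrow> 'k \<Rightarrow> 'r" where "DF = inv EF"

lemma DO_EO[simp]: "DO (EO x) = x" unfolding DO_def by (rule inv_f_f[OF inj_EO])
lemma DM_EM[simp]: "DM (EM x) = x" unfolding DM_def by (rule inv_f_f[OF inj_EM])
lemma DF_EF[simp]: "DF (EF x) = x" unfolding DF_def by (rule inv_f_f[OF inj_EF])
lemma EO_eq[simp]: "EO x = EO y \<longleftrightarrow> x = y" by (metis DO_EO)
lemma EM_eq[simp]: "EM x = EM y \<longleftrightarrow> x = y" by (metis DM_EM)
lemma EF_eq[simp]: "EF x = EF y \<longleftrightarrow> x = y" by (metis DF_EF)

context PR begin

abbreviation "jo x \<equiv> fst (DO x)"
abbreviation "lo x \<equiv> fst (snd (DO x))"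
abbreviation "to x \<equiv> snd (snd (DO x))"

definition SI :: "(('o,'m,'k,'r) univ, ('o,'m,'k,'r) univ) cat" where
  "SI = \<lparr> Ob = EO ` {\<sigma>. good \<sigma>}, Ar = EM ` {(\<sigma>,\<tau>,p,q). mor \<sigma> \<tau> p q},
     Dom = (\<lambda>x. EO (fst (DM x))), Cod = (\<lambda>x. EO (fst (snd (DM x)))),
     Cmp = (\<lambda>y x. EM (fst (DM x), fst (snd (DM y)), Cmp I (fst (snd (snd (DM y)))) (fst (snd (snd (DM x)))),
                       Cmp I (snd (snd (snd (DM y)))) (snd (snd (snd (DM x)))))),
     Idn = (\<lambda>x. EM (DO x, DO x, Idn I (jo x), Idn I (lo x))) \<rparr>"

lemma mor_good: "mor \<sigma> \<tau> p q \<Longrightarrow> good \<sigma> \<and> good \<tau>" unfolding mor_def by auto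

lemma mor_homs: "mor \<sigma> \<tau> p q \<Longrightarrow> p \<in> hom I (fst \<sigma>) (fst \<tau>) \<and> q \<in> hom I (fst (snd \<sigma>)) (fst (snd \<tau>))"
  by (cases \<sigma>; cases \<tau>) (auto simp: mor_simp)

lemma mor_idG: "good \<sigma> \<Longrightarrow> mor \<sigma> \<sigma> (Idn I (fst \<sigma>)) (Idn I (fst (snd \<sigma>)))"
  by (cases \<sigma>) (auto intro: mor_id)

lemma mor_compG: "mor \<sigma>1 \<sigma>2 p q \<Longrightarrow> mor \<sigma>2 \<sigma>3 p' q' \<Longrightarrow> mor \<sigma>1 \<sigma>3 (Cmp I p' p) (Cmp I q' q)"
  by (cases \<sigma>1; cases \<sigma>2; cases \<sigma>3) (auto intro: mor_comp)

lemma SI_hom: "x \<in> hom SI (EO \<sigma>) (EO \<tau>) \<longleftrightarrow> (\<exists>p q. x = EM (\<sigma>,\<tau>,p,q) \<and> mor \<sigma> \<tau> p q)"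
  unfolding hom_def SI_def by auto

lemma SI_cmp: "Cmp SI (EM (\<sigma>2,\<sigma>3,p',q')) (EM (\<sigma>1,\<sigma>2,p,q)) = EM (\<sigma>1,\<sigma>3,Cmp I p' p, Cmp I q' q)"
  unfolding SI_def by simp

lemma SI_idn: "Idn SI (EO \<sigma>) = EM (\<sigma>,\<sigma>,Idn I (fst \<sigma>), Idn I (fst (snd \<sigma>)))"
  unfolding SI_def by simp

lemma cat_SI: "category SI"
proof -
  have 1: "\<forall>u\<in>Ar SI. Dom SI u \<in> Ob SI \<and> Cod SI u \<in> Ob SI" unfolding SI_def using mor_good by auto
  have 2: "\<forall>x\<in>Ob SI. Idn SI x \<in> hom SI x x" unfolding SI_def hom_def using mor_idG by auto
  have 3: "\<forall>f\<in>Ar SI. \<forall>g\<in>Ar SI. Cod SI f = Dom SI g \<longrightarrow> Cmp SI g f \<in> hom SI (Dom SI f) (Cod SI g)"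
    unfolding SI_def hom_def using mor_compG by auto
  have 4: "\<forall>f\<in>Ar SI. Cmp SI (Idn SI (Cod SI f)) f = f \<and> Cmp SI f (Idn SI (Dom SI f)) = f"
    unfolding SI_def by (auto dest!: mor_homs simp: cmp_idl cmp_idr)
  have 5: "\<forall>f\<in>Ar SI. \<forall>g\<in>Ar SI. \<forall>h\<in>Ar SI. Cod SI f = Dom SI g \<and> Cod SI g = Dom SI h \<longrightarrow>
         Cmp SI h (Cmp SI g f) = Cmp SI (Cmp SI h g) f"
    unfolding SI_def by (auto dest!: mor_homs intro: cmp_assoc)
  show ?thesis unfolding category_def using 1 2 3 4 5 by blast
qed

lemma filt_SI: "filtered SI"
  unfolding filtered_def
proof (intro conjI ballI allI impI cat_SI)
  obtain j where "j \<in> Ob I" using ob_ne by auto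
  then obtain l t where "good (j,l,t)" using good_ex0 by blast
  then show "Ob SI \<noteq> {}" unfolding SI_def by auto
next
  fix x y assume x: "x \<in> Ob SI" and y: "y \<in> Ob SI"
  then obtain j1 l1 t1 j2 l2 t2 where xy: "x = EO (j1,l1,t1)" "y = EO (j2,l2,t2)" "good (j1,l1,t1)" "good (j2,l2,t2)"
    unfolding SI_def by auto
  then obtain j l t p1 q1 p2 q2 where "mor (j1,l1,t1) (j,l,t) p1 q1" "mor (j2,l2,t2) (j,l,t) p2 q2"
    using bound_S by blast
  then show "\<exists>c u v. u \<in> hom SI x c \<and> v \<in> hom SI y c"
    unfolding xy by (intro exI[of _ "EO (j,l,t)"] exI[of _ "EM ((j1,l1,t1),(j,l,t),p1,q1)"]
       exI[of _ "EM ((j2,l2,t2),(j,l,t),p2,q2)"]) (auto simp: SI_hom)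
next
  fix x y u v assume "u \<in> hom SI x y \<and> v \<in> hom SI x y"
  then obtain \<sigma> \<tau> p q p' q' where e: "x = EO \<sigma>" "y = EO \<tau>" "u = EM (\<sigma>,\<tau>,p,q)" "v = EM (\<sigma>,\<tau>,p',q')"
    "mor \<sigma> \<tau> p q" "mor \<sigma> \<tau> p' q'"
    unfolding hom_def SI_def by auto
  obtain j1 l1 t1 j2 l2 t2 where st: "\<sigma> = (j1,l1,t1)" "\<tau> = (j2,l2,t2)" by (cases \<sigma>; cases \<tau>) auto
  obtain j l t w e' where w: "mor (j2,l2,t2) (j,l,t) w e'" "Cmp I w p = Cmp I w p'" "Cmp I e' q = Cmp I e' q'"
    using equal_S[OF e(5)[unfolded st] e(6)[unfolded st]] by blast
  show "\<exists>c w. w \<in> hom SI y c \<and> Cmp SI w u = Cmp SI w v"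
    apply (rule exI[of _ "EO (j,l,t)"], rule exI[of _ "EM ((j2,l2,t2),(j,l,t),w,e')"])
    unfolding e st SI_hom SI_cmp using w by auto
qed

end

context PR begin

definition Sr :: "(('o,'m,'k,'r) univ, ('o,'m,'k,'r) univ, ('o,'m,'k,'r) univ) prorng" where
  "Sr = \<lparr> PIx = SI,
     PRg = (\<lambda>x. \<lparr> rcar = EF ` clo (jo x) (lo x) (to x),
                  radd = (\<lambda>u v. EF (\<lambda>k. ad (jo x) (DF u k) (DF v k))),
                  rmul = (\<lambda>u v. EF (\<lambda>k. mu (jo x) (DF u k) (DF v 1))),
                  rzero = EF (\<lambda>k. ze (jo x)),
                  rneg = (\<lambda>u. EF (\<lambda>k. ng (jo x) (DF u k))) \<rparr>),
     PTr = (\<lambda>m u. EF (\<lambda>k. tr (fst (snd (snd (DM m)))) (DF u k))) \<rparr>"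

lemma Sr_simps: "PIx Sr = SI"
  "rcar (PRg Sr (EO (j,l,t))) = EF ` clo j l t"
  "radd (PRg Sr (EO (j,l,t))) u v = EF (\<lambda>k. ad j (DF u k) (DF v k))"
  "rmul (PRg Sr (EO (j,l,t))) u v = EF (\<lambda>k. mu j (DF u k) (DF v 1))"
  "rzero (PRg Sr (EO (j,l,t))) = EF (\<lambda>k. ze j)"
  "rneg (PRg Sr (EO (j,l,t))) u = EF (\<lambda>k. ng j (DF u k))"
  "PTr Sr (EM (\<sigma>,\<tau>,p,q)) u = EF (\<lambda>k. tr p (DF u k))"
  by (simp_all add: Sr_def)

lemma rng_S: assumes g: "good (j,l,t)" shows "is_rng (PRg Sr (EO (j,l,t)))"
proof -
  have Rj: "is_rng (PRg R j)" using Rj[OF g] .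
  note cv = clo_val[OF g]
  show ?thesis unfolding is_rng_def Sr_simps
    apply (intro conjI ballI)
    apply (auto intro: clo.intros simp: fun_eq_iff)
    apply (auto simp: cv rng_add_assoc[OF Rj] rng_mul_assoc[OF Rj] rng_distl[OF Rj] rng_distr[OF Rj]
      rng_add_comm[OF Rj] rng_add0l[OF Rj] rng_negl[OF Rj])
    done
qed

lemma Sr_ob: "x \<in> Ob SI \<longleftrightarrow> (\<exists>j l t. x = EO (j,l,t) \<and> good (j,l,t))"
  unfolding SI_def by auto

lemma Sr_ar: "u \<in> Ar SI \<longleftrightarrow> (\<exists>\<sigma> \<tau> p q. u = EM (\<sigma>,\<tau>,p,q) \<and> mor \<sigma> \<tau> p q)"
  unfolding SI_def by auto

lemma SI_dom: "Dom SI (EM (\<sigma>,\<tau>,p,q)) = EO \<sigma>" and SI_cod: "Cod SI (EM (\<sigma>,\<tau>,p,q)) = EO \<tau>"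
  unfolding SI_def by auto

lemma clo_trG: "mor \<sigma> \<tau> p q \<Longrightarrow> f \<in> clo (fst \<tau>) (fst (snd \<tau>)) (snd (snd \<tau>)) \<Longrightarrow>
   (\<lambda>k. tr p (f k)) \<in> clo (fst \<sigma>) (fst (snd \<sigma>)) (snd (snd \<sigma>))"
  by (cases \<sigma>; cases \<tau>) (auto intro: clo_tr)

lemma EO_split: "EO \<sigma> = EO (fst \<sigma>, fst (snd \<sigma>), snd (snd \<sigma>))" by simp

lemma prorng_S: "is_prorng Sr"
proof -
  have tm: "\<forall>u\<in>Ar SI. \<forall>x\<in>rcar (PRg Sr (Cod SI u)). PTr Sr u x \<in> rcar (PRg Sr (Dom SI u))"
  proof (intro ballI)
    fix u x assume u: "u \<in> Ar SI" and x: "x \<in> rcar (PRg Sr (Cod SI u))"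
    obtain \<sigma> \<tau> p q where m: "u = EM (\<sigma>,\<tau>,p,q)" "mor \<sigma> \<tau> p q" using u unfolding Sr_ar by blast
    obtain j1 l1 t1 where st1: "\<sigma> = (j1,l1,t1)" by (rule prod_cases3)
    obtain j2 l2 t2 where st2: "\<tau> = (j2,l2,t2)" by (rule prod_cases3)
    note st = st1 st2
    from x obtain f where f: "x = EF f" "f \<in> clo j2 l2 t2" unfolding m st SI_cod Sr_simps by auto
    show "PTr Sr u x \<in> rcar (PRg Sr (Dom SI u))"
      unfolding m st SI_dom Sr_simps f using clo_tr[OF m(2)[unfolded st] f(2)] by auto
  qed
  have ti: "\<forall>a\<in>Ob SI. \<forall>x\<in>rcar (PRg Sr a). PTr Sr (Idn SI a) x = x"
  proof (intro ballI)
    fix a x assume a: "a \<in> Ob SI" and x: "x \<in> rcar (PRg Sr a)"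
    obtain j l t where a': "a = EO (j,l,t)" "good (j,l,t)" using a unfolding Sr_ob by blast
    from x obtain f where f: "x = EF f" "f \<in> clo j l t" unfolding a' Sr_simps by auto
    show "PTr Sr (Idn SI a) x = x" unfolding a' SI_idn Sr_simps f
      using tr_id[OF gj[OF a'(2)] clo_val[OF a'(2) f(2)]] by simp
  qed
  have tc: "\<forall>f\<in>Ar SI. \<forall>g\<in>Ar SI. Cod SI f = Dom SI g \<longrightarrow>
         (\<forall>x\<in>rcar (PRg Sr (Cod SI g)). PTr Sr (Cmp SI g f) x = PTr Sr f (PTr Sr g x))"
  proof (intro ballI impI)
    fix f g x assume f: "f \<in> Ar SI" and g: "g \<in> Ar SI" and fg: "Cod SI f = Dom SI g"
      and x: "x \<in> rcar (PRg Sr (Cod SI g))"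
    obtain \<sigma>1 \<sigma>2 p q where m1: "f = EM (\<sigma>1,\<sigma>2,p,q)" "mor \<sigma>1 \<sigma>2 p q" using f unfolding Sr_ar by blast
    obtain \<sigma>2' \<sigma>3 p' q' where m2: "g = EM (\<sigma>2',\<sigma>3,p',q')" "mor \<sigma>2' \<sigma>3 p' q'" using g unfolding Sr_ar by blast
    have e: "\<sigma>2' = \<sigma>2" using fg unfolding m1 m2 SI_dom SI_cod by simp
    obtain j3 l3 t3 where s3: "\<sigma>3 = (j3,l3,t3)" by (rule prod_cases3)
    from x obtain h where h: "x = EF h" "h \<in> clo j3 l3 t3" unfolding m2 s3 SI_cod Sr_simps by auto
    have hp: "p \<in> hom I (fst \<sigma>1) (fst \<sigma>2)" "p' \<in> hom I (fst \<sigma>2) (fst \<sigma>3)"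
      using mor_homs m1(2) m2(2) e by auto
    have g3: "good (j3,l3,t3)" using mor_good m2(2) s3 by auto
    show "PTr Sr (Cmp SI g f) x = PTr Sr f (PTr Sr g x)"
      unfolding m1 m2 e SI_cmp Sr_simps h
      using tr_cmp[OF hp(1) hp(2)] clo_val[OF g3 h(2)] s3 by simp
  qed
  have rl: "\<forall>i\<in>Ob SI. is_rng (PRg Sr i)" using rng_S Sr_ob by auto
  have rh: "\<forall>u\<in>Ar SI. rng_hom (PRg Sr (Cod SI u)) (PRg Sr (Dom SI u)) (PTr Sr u)"
  proof
    fix u assume u: "u \<in> Ar SI"
    obtain \<sigma> \<tau> p q where m: "u = EM (\<sigma>,\<tau>,p,q)" "mor \<sigma> \<tau> p q" using u unfolding Sr_ar by blast
    obtain j1 l1 t1 where st1: "\<sigma> = (j1,l1,t1)" by (rule prod_cases3)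
    obtain j2 l2 t2 where st2: "\<tau> = (j2,l2,t2)" by (rule prod_cases3)
    note st = st1 st2
    have mm: "mor (j1,l1,t1) (j2,l2,t2) p q" using m st by simp
    have ph: "p \<in> hom I j1 j2" and g2: "good (j2,l2,t2)" using mm unfolding mor_simp by auto
    have th: "rng_hom (PRg R j2) (PRg R j1) (tr p)" using tr_hom[OF ph] .
    show "rng_hom (PRg Sr (Cod SI u)) (PRg Sr (Dom SI u)) (PTr Sr u)"
      unfolding rng_hom_def m st SI_dom SI_cod Sr_simps
      using th clo_val[OF g2] clo_tr[OF mm] unfolding rng_hom_def by auto
  qed
  show ?thesis unfolding is_prorng_def proset_def und_def
    using filt_SI tm ti tc rl rh by (simp add: Sr_simps)
qed

end

context PR begin

definition smS :: "('o,'m,'k,'r) univ \<Rightarrow> 'k \<Rightarrow> ('o,'m,'k,'r) univ \<Rightarrow> ('o,'m,'k,'r) univ" where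
  "smS x c u = EF (\<lambda>k. DF u (k * c))"

lemma kalg_S: assumes g: "good (j,l,t)" shows "is_kalg (PRg Sr (EO (j,l,t))) (smS (EO (j,l,t)))"
proof -
  have Rj: "is_rng (PRg R j)" using Rj[OF g] .
  note cv = clo_val[OF g]
  have ak: "\<And>f k k'. f \<in> clo j l t \<Longrightarrow> f (k + k') = ad j (f k) (f k')" using clo_addk[OF g] .
  have bal: "\<And>f h k c. f \<in> clo j l t \<Longrightarrow> h \<in> clo j l t \<Longrightarrow> mu j (f (k*c)) (h 1) = mu j (f k) (h c)"
    using clo_bal[OF g] .
  show ?thesis unfolding is_kalg_def
  proof (intro conjI rng_S[OF g] allI ballI)
    fix k x assume "x \<in> rcar (PRg Sr (EO (j, l, t)))"
    then show "smS (EO (j, l, t)) k x \<in> rcar (PRg Sr (EO (j, l, t)))"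
      unfolding Sr_simps smS_def by (auto intro: clo.sml)
  next
    fix k k' x y assume x: "x \<in> rcar (PRg Sr (EO (j, l, t)))" and y: "y \<in> rcar (PRg Sr (EO (j, l, t)))"
    then obtain f h where fh: "x = EF f" "y = EF h" "f \<in> clo j l t" "h \<in> clo j l t" unfolding Sr_simps by auto
    show "smS (EO (j, l, t)) k (radd (PRg Sr (EO (j, l, t))) x y) =
       radd (PRg Sr (EO (j, l, t))) (smS (EO (j, l, t)) k x) (smS (EO (j, l, t)) k y)"
      unfolding Sr_simps smS_def by simp
    show "smS (EO (j, l, t)) (k + k') x =
       radd (PRg Sr (EO (j, l, t))) (smS (EO (j, l, t)) k x) (smS (EO (j, l, t)) k' x)"
      unfolding Sr_simps smS_def fh using ak[OF fh(3)] by (simp add: distrib_left)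
    show "smS (EO (j, l, t)) (k * k') x = smS (EO (j, l, t)) k (smS (EO (j, l, t)) k' x)"
      unfolding Sr_simps smS_def fh by (simp add: mult.assoc)
    show "smS (EO (j, l, t)) 1 x = x" unfolding Sr_simps smS_def fh by simp
    show "smS (EO (j, l, t)) k (rmul (PRg Sr (EO (j, l, t))) x y) =
       rmul (PRg Sr (EO (j, l, t))) (smS (EO (j, l, t)) k x) y"
      unfolding Sr_simps smS_def fh by simp
    show "smS (EO (j, l, t)) k (rmul (PRg Sr (EO (j, l, t))) x y) =
       rmul (PRg Sr (EO (j, l, t))) x (smS (EO (j, l, t)) k y)"
      unfolding Sr_simps smS_def fh using bal[OF fh(3) fh(4)] by simp
  qed
qed

lemma prokalg_S: "is_prokalg Sr smS"
  unfolding is_prokalg_def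
proof (intro conjI prorng_S ballI allI)
  fix x assume "x \<in> Ob (PIx Sr)"
  then obtain j l t where "x = EO (j,l,t)" "good (j,l,t)" unfolding Sr_simps Sr_ob by blast
  then show "is_kalg (PRg Sr x) (smS x)" using kalg_S by simp
next
  fix u k x assume u: "u \<in> Ar (PIx Sr)" and x: "x \<in> rcar (PRg Sr (Cod (PIx Sr) u))"
  obtain \<sigma> \<tau> p q where m: "u = EM (\<sigma>,\<tau>,p,q)" "mor \<sigma> \<tau> p q" using u unfolding Sr_simps Sr_ar by blast
  show "PTr Sr u (smS (Cod (PIx Sr) u) k x) = smS (Dom (PIx Sr) u) k (PTr Sr u x)"
    unfolding m Sr_simps smS_def by simp
qed

definition gsel :: "'o \<Rightarrow> 'o \<times> 'o \<times> 'm" where "gsel j = (SOME \<sigma>. good \<sigma> \<and> fst \<sigma> = j)"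

lemma gsel: "j \<in> Ob I \<Longrightarrow> good (gsel j) \<and> fst (gsel j) = j"
proof -
  assume "j \<in> Ob I"
  then obtain l t where "good (j,l,t)" using good_ex0 by blast
  then have "\<exists>\<sigma>. good \<sigma> \<and> fst \<sigma> = j" by auto
  then show ?thesis unfolding gsel_def by (rule someI_ex)
qed

definition FF where "FF = (\<lambda>x. lo x, \<lambda>x y. (EF (\<lambda>k. al (jo x) k (tr (to x) y)) :: ('o,'m,'k,'r) univ))"
definition GG where "GG = (\<lambda>j. (EO (gsel j) :: ('o,'m,'k,'r) univ), \<lambda>j x. DF x 1)"

end

context PR begin

lemma obS: "x \<in> Ob (Ix (und Sr)) \<Longrightarrow> \<exists>j l t. x = EO (j,l,t) \<and> good (j,l,t)"
  and obS': "x \<in> Ob (PIx Sr) \<Longrightarrow> \<exists>j l t. x = EO (j,l,t) \<and> good (j,l,t)"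
  by (simp_all add: und_def Sr_simps Sr_ob)

lemma arS: "v \<in> Ar (Ix (und Sr)) \<Longrightarrow> \<exists>\<sigma> \<tau> p q. v = EM (\<sigma>,\<tau>,p,q) \<and> mor \<sigma> \<tau> p q"
  by (simp add: und_def Sr_simps Sr_ar)

lemma FF_mor: "prorng_mor R Sr FF"
proof -
have P1: "\<forall>x\<in>Ob (Ix (und Sr)). fst FF x \<in> Ob (Ix (und R)) \<and> (\<forall>y\<in>Lv (und R) (fst FF x). snd FF x y \<in> Lv (und Sr) x)"
proof
  fix x assume "x \<in> Ob (Ix (und Sr))"
  then obtain j l t where x: "x = EO (j,l,t)" "good (j,l,t)" using obS by blast
  show "fst FF x \<in> Ob (Ix (und R)) \<and> (\<forall>y\<in>Lv (und R) (fst FF x). snd FF x y \<in> Lv (und Sr) x)"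
    unfolding x FF_def und_def using goodD[OF x(2)] by (auto simp: Sr_simps intro: clo.gen)
qed
have P2: "\<forall>v\<in>Ar (Ix (und Sr)). germ_eq (und R) (fst FF (Cod (Ix (und Sr)) v)) (\<lambda>x. Tr (und Sr) v (snd FF (Cod (Ix (und Sr)) v) x))
          (fst FF (Dom (Ix (und Sr)) v)) (snd FF (Dom (Ix (und Sr)) v))"
proof
  fix v assume "v \<in> Ar (Ix (und Sr))"
  then obtain \<sigma> \<tau> p q where m: "v = EM (\<sigma>,\<tau>,p,q)" "mor \<sigma> \<tau> p q" using arS by blast
  obtain j1 l1 t1 where s1: "\<sigma> = (j1,l1,t1)" by (rule prod_cases3)
  obtain j2 l2 t2 where s2: "\<tau> = (j2,l2,t2)" by (rule prod_cases3)
  have mm: "mor (j1,l1,t1) (j2,l2,t2) p q" using m s1 s2 by simp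
  then have h: "q \<in> hom I l1 l2" "good (j2,l2,t2)" and c: "\<forall>k. \<forall>y\<in>Rc l2. tr p (al j2 k (tr t2 y)) = al j1 k (tr t1 (tr q y))"
    unfolding mor_simp by auto
  have l2: "l2 \<in> Ob I" using goodD[OF h(2)] by auto
  show "germ_eq (und R) (fst FF (Cod (Ix (und Sr)) v)) (\<lambda>x. Tr (und Sr) v (snd FF (Cod (Ix (und Sr)) v) x))
          (fst FF (Dom (Ix (und Sr)) v)) (snd FF (Dom (Ix (und Sr)) v))"
    unfolding germ_eq_def
    apply (rule exI[of _ l2], rule exI[of _ "Idn I l2"], rule exI[of _ q])
    unfolding m s1 s2 und_def FF_def Sr_simps SI_dom SI_cod
    using idn_hom[OF l2] h(1) c tr_id[OF l2] by (simp add: SI_dom SI_cod Sr_simps)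
qed
have P3: "\<forall>x\<in>Ob (PIx Sr). rng_hom (PRg R (fst FF x)) (PRg Sr x) (snd FF x)"
proof
  fix x assume "x \<in> Ob (PIx Sr)"
  then obtain j l t where x: "x = EO (j,l,t)" "good (j,l,t)" using obS' by blast
  have Rj: "is_rng (PRg R j)" and Rl: "is_rng (PRg R l)" using Rj[OF x(2)] rngI goodD[OF x(2)] by auto
  show "rng_hom (PRg R (fst FF x)) (PRg Sr x) (snd FF x)"
    unfolding rng_hom_def x FF_def
    using g2[OF x(2)] g7[OF x(2)] unfolding G2_def G7_def by (auto simp: Sr_simps intro: clo.gen)
qed
show ?thesis using P1 P2 P3 unfolding prorng_mor_def promor_def by blast
qed


lemma gsel_split: "j \<in> Ob I \<Longrightarrow> \<exists>l t. gsel j = (j,l,t) \<and> good (j,l,t)"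
  using gsel by (metis prod.collapse)

lemma GG_mor: "prorng_mor Sr R GG"
proof -
have P1: "\<forall>j\<in>Ob (Ix (und R)). fst GG j \<in> Ob (Ix (und Sr)) \<and> (\<forall>x\<in>Lv (und Sr) (fst GG j). snd GG j x \<in> Lv (und R) j)"
proof
  fix j assume "j \<in> Ob (Ix (und R))"
  then have j: "j \<in> Ob I" by (simp add: und_def)
  obtain l t where g: "gsel j = (j,l,t)" "good (j,l,t)" using gsel_split[OF j] by blast
  show "fst GG j \<in> Ob (Ix (und Sr)) \<and> (\<forall>x\<in>Lv (und Sr) (fst GG j). snd GG j x \<in> Lv (und R) j)"
    unfolding GG_def und_def using g(2) clo_val[OF g(2)] by (auto simp: Sr_simps Sr_ob g(1))
qed
have P2: "\<forall>v\<in>Ar (Ix (und R)). germ_eq (und Sr) (fst GG (Cod (Ix (und R)) v)) (\<lambda>x. Tr (und R) v (snd GG (Cod (Ix (und R)) v) x))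
          (fst GG (Dom (Ix (und R)) v)) (snd GG (Dom (Ix (und R)) v))"
proof
  fix v assume "v \<in> Ar (Ix (und R))"
  then have v: "v \<in> hom I (Dom I v) (Cod I v)" by (simp add: und_def hom_def)
  define j where "j = Dom I v"
  define j' where "j' = Cod I v"
  have v': "v \<in> hom I j j'" using v unfolding j_def j'_def .
  obtain l t where g: "gsel j = (j,l,t)" "good (j,l,t)" using gsel_split[OF ob_dom[OF v']] by blast
  obtain l' t' where g': "gsel j' = (j',l',t')" "good (j',l',t')" using gsel_split[OF ob_cod[OF v']] by blast
  obtain la ta qa where m1: "mor (j,l,t) (j',la,ta) v qa" using ext[OF g(2) v'] by blast
  have ga: "good (j',la,ta)" using m1 unfolding mor_simp by auto
  obtain L T r1 r2 where m2: "mor (j',la,ta) (j',L,T) (Idn I j') r1" "mor (j',l',t') (j',L,T) (Idn I j') r2"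
    using merge[OF ga g'(2)] by blast
  have m3: "mor (j,l,t) (j',L,T) (Cmp I (Idn I j') v) (Cmp I r1 qa)" using mor_comp[OF m1 m2(1)] .
  have gT: "good (j',L,T)" using m2 unfolding mor_simp by auto
  have j'o: "j' \<in> Ob I" using ob_cod[OF v'] .
  show "germ_eq (und Sr) (fst GG (Cod (Ix (und R)) v)) (\<lambda>x. Tr (und R) v (snd GG (Cod (Ix (und R)) v) x))
          (fst GG (Dom (Ix (und R)) v)) (snd GG (Dom (Ix (und R)) v))"
    unfolding germ_eq_def
    apply (rule exI[of _ "EO (j',L,T)"], rule exI[of _ "EM ((j',l',t'),(j',L,T),Idn I j', r2)"],
      rule exI[of _ "EM ((j,l,t),(j',L,T),Cmp I (Idn I j') v, Cmp I r1 qa)"])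
    using m2(2) m3 g g' cmp_idl[OF v'] clo_val[OF gT] tr_id[OF j'o]
    by (auto simp: und_def GG_def Sr_simps SI_hom j_def[symmetric] j'_def[symmetric])
qed
have P3: "\<forall>j\<in>Ob (PIx R). rng_hom (PRg Sr (fst GG j)) (PRg R j) (snd GG j)"
proof
  fix j assume j: "j \<in> Ob (PIx R)"
  obtain l t where g: "gsel j = (j,l,t)" "good (j,l,t)" using gsel_split[OF j] by blast
  show "rng_hom (PRg Sr (fst GG j)) (PRg R j) (snd GG j)"
    unfolding rng_hom_def GG_def using clo_val[OF g(2)] by (auto simp: Sr_simps g(1))
qed
show ?thesis using P1 P2 P3 unfolding prorng_mor_def promor_def by blast
qed


lemma GF_id: "promor_eq (und R) (und R) (pcomp GG FF) pid"
  unfolding promor_eq_def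
proof
  fix j assume "j \<in> Ob (Ix (und R))"
  then have j: "j \<in> Ob I" by (simp add: und_def)
  obtain l t where g: "gsel j = (j,l,t)" "good (j,l,t)" using gsel_split[OF j] by blast
  obtain s where s: "s \<in> hom I j l" "\<forall>y\<in>Rc l. al j 1 (tr t y) = tr s y" using g5[OF g(2)] unfolding G5_def by blast
  have l: "l \<in> Ob I" using goodD[OF g(2)] by auto
  show "germ_eq (und R) (fst (pcomp GG FF) j) (snd (pcomp GG FF) j) (fst pid j) (snd pid j)"
    unfolding germ_eq_def
    apply (rule exI[of _ l], rule exI[of _ "Idn I l"], rule exI[of _ s])
    using idn_hom[OF l] s tr_id[OF l] by (simp add: pcomp_def pid_def GG_def FF_def g(1) und_def)
qed

lemma FG_id: "promor_eq (und Sr) (und Sr) (pcomp FF GG) pid"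
  unfolding promor_eq_def
proof
  fix x assume "x \<in> Ob (Ix (und Sr))"
  then obtain j l t where x: "x = EO (j,l,t)" "good (j,l,t)" using obS by blast
  have l: "l \<in> Ob I" using goodD[OF x(2)] by auto
  obtain l' t' where g: "gsel l = (l,l',t')" "good (l,l',t')" using gsel_split[OF l] by blast
  obtain L qa qb s where F: "mor (l,l',t') (l,L,Cmp I qa t') (Idn I l) qa" "mor (j,l,t) (l,L,Cmp I qa t') s qb"
    "\<forall>f\<in>clo l L (Cmp I qa t'). \<forall>k. al j k (tr t (tr (Idn I l) (f 1))) = tr s (f k)"
    using FG[OF x(2) g(2)] by blast
  show "germ_eq (und Sr) (fst (pcomp FF GG) x) (snd (pcomp FF GG) x) (fst pid x) (snd pid x)"
    unfolding germ_eq_def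
    apply (rule exI[of _ "EO (l,L,Cmp I qa t')"], rule exI[of _ "EM ((l,l',t'),(l,L,Cmp I qa t'),Idn I l, qa)"],
      rule exI[of _ "EM ((j,l,t),(l,L,Cmp I qa t'),s,qb)"])
    using F by (auto simp: pcomp_def pid_def GG_def FF_def g(1) und_def x(1) SI_hom Sr_simps)
qed

lemma K_compat: "promor_eq (cprod (UNIV :: 'k set) (und R)) (und Sr)
             (pcomp FF A) (pcomp (lw (\<lambda>j (k, s). smS j k s)) (ctimes FF))"
  unfolding promor_eq_def
proof
  fix x assume "x \<in> Ob (Ix (und Sr))"
  then obtain j l t where x: "x = EO (j,l,t)" "good (j,l,t)" using obS by blast
  obtain m u u' where M: "u \<in> hom I (a l) m" "u' \<in> hom I l m"
    "\<forall>z\<in>Rc m. \<forall>k c. al j k (tr t (al l c (tr u z))) = al j (k*c) (tr t (tr u' z))"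
    using M_germ[OF gj[OF x(2)] gt[OF x(2)]] by blast
  show "germ_eq (cprod UNIV (und R)) (fst (pcomp FF A) x) (snd (pcomp FF A) x)
          (fst (pcomp (lw (\<lambda>j (k, s). smS j k s)) (ctimes FF)) x) (snd (pcomp (lw (\<lambda>j (k, s). smS j k s)) (ctimes FF)) x)"
    unfolding germ_eq_def
    apply (rule exI[of _ m], rule exI[of _ u], rule exI[of _ u'])
    using M by (auto simp: pcomp_def lw_def ctimes_def cprod_def FF_def und_def x(1) smS_def hom_def)
qed


lemma main: "\<exists>(S :: (('o, 'm, 'k, 'r) univ, ('o, 'm, 'k, 'r) univ, ('o, 'm, 'k, 'r) univ) prorng)
            (sm :: ('o, 'm, 'k, 'r) univ \<Rightarrow> 'k \<Rightarrow> ('o, 'm, 'k, 'r) univ \<Rightarrow> ('o, 'm, 'k, 'r) univ)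
            F G.
           is_prokalg S sm \<and>
           prorng_mor R S F \<and> prorng_mor S R G \<and>
           promor_eq (und R) (und R) (pcomp G F) pid \<and>
           promor_eq (und S) (und S) (pcomp F G) pid \<and>
           promor_eq (cprod (UNIV :: 'k set) (und R)) (und S)
             (pcomp F A) (pcomp (lw (\<lambda>j (k, s). sm j k s)) (ctimes F))"
  using prokalg_S FF_mor GG_mor GF_id FG_id K_compat by blast

end

theorem mainTheorem9:
  fixes R :: "('o, 'm, 'r) prorng"
    and A :: "('o, 'o, 'k::comm_ring_1 \<times> 'r, 'r) promap"
  assumes R: "is_prorng R"
    and act: "promor (cprod (UNIV :: 'k set) (und R)) (und R) A"
    and mult_assoc:
      "promor_eq (cprod (UNIV :: ('k \<times> 'k) set) (und R)) (und R)
         (pcomp A (lw (\<lambda>j ((k, k'), a). (k * k', a))))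
         (pcomp A (pcomp (ctimes A) (lw (\<lambda>j ((k, k'), a). (k, (k', a))))))"
    and unit:
      "promor_eq (und R) (und R) (pcomp A (lw (\<lambda>j a. (1, a)))) pid"
    and add_right:
      "promor_eq (cprod (UNIV :: 'k set) (pprod (und R) (und R))) (und R)
         (pcomp A (ctimes (padd R)))
         (pcomp (padd R) (pcomp (ptimes A A) (lw (\<lambda>j (k, (a, b)). ((k, a), (k, b))))))"
    and add_left:
      "promor_eq (cprod (UNIV :: ('k \<times> 'k) set) (und R)) (und R)
         (pcomp A (lw (\<lambda>j ((k, k'), a). (k + k', a))))
         (pcomp (padd R) (pcomp (ptimes A A)
            (pcomp (lw (\<lambda>j ((k, k'), (a, b)). ((k, a), (k', b)))) (ctimes (diag (und R))))))"
    and mul_left: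
      "promor_eq (cprod (UNIV :: 'k set) (pprod (und R) (und R))) (und R)
         (pcomp A (ctimes (pmul R)))
         (pcomp (pmul R) (pcomp (ptimes A pid) (lw (\<lambda>j (k, (a, b)). ((k, a), b)))))"
    and mul_right:
      "promor_eq (cprod (UNIV :: 'k set) (pprod (und R) (und R))) (und R)
         (pcomp A (ctimes (pmul R)))
         (pcomp (pmul R) (pcomp (ptimes pid A) (lw (\<lambda>j (k, (a, b)). (a, (k, b))))))"
  shows "\<exists>(S :: (('o, 'm, 'k, 'r) univ, ('o, 'm, 'k, 'r) univ, ('o, 'm, 'k, 'r) univ) prorng)
            (sm :: ('o, 'm, 'k, 'r) univ \<Rightarrow> 'k \<Rightarrow> ('o, 'm, 'k, 'r) univ \<Rightarrow> ('o, 'm, 'k, 'r) univ)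
            F G.
           is_prokalg S sm \<and>
           prorng_mor R S F \<and> prorng_mor S R G \<and>
           promor_eq (und R) (und R) (pcomp G F) pid \<and>
           promor_eq (und S) (und S) (pcomp F G) pid \<and>
           promor_eq (cprod (UNIV :: 'k set) (und R)) (und S)
             (pcomp F A) (pcomp (lw (\<lambda>j (k, s). sm j k s)) (ctimes F))"
proof -
  have "PR R A" unfolding PR_def using assms by blast
  then show ?thesis by (rule PR.main)
qed


end
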